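(* Let $({\cal A},{\cal A}_0)$ be a locally convex quasi *-algebra with identity and topology $\tau$, let $\omega_0$ be a positive linear functional on ${\cal A}_0$ with $\omega_0(a^*a)\le p(a)^2$ for all $a\in{\cal A}_0$ for some $\tau$-continuous seminorm $p$, let $\omega=\tilde\omega_0$ be its continuous extension to ${\cal A}$ with GNS construction $(\pi_\omega,\lambda_\omega,{\cal H}_\omega)$, and for $b\in{\cal A}_0$ let $P_\omega^b$ be the orthogonal projection of ${\cal H}_\omega$ onto ${\cal H}_\omega^b=\overline{\pi_\omega({\cal A}_0)\lambda_\omega(b)}$. Suppose that $\pi_\omega(a)$ is bounded for every $a\in{\cal A}_0$. Then $\pi_\omega({\cal A})'_w$ is a von Neumann algebra and $P_\omega^b\in\pi_\omega({\cal A})'_w$.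
   Context: A locally convex quasi *-algebra $({\cal A},{\cal A}_0)$: ${\cal A}_0$ is a *-algebra with a locally convex topology $\tau$ making the involution and the multiplications $a\mapsto ab$, $a\mapsto ba$ ($b\in{\cal A}_0$) continuous, ${\cal A}$ is the $\tau$-completion with involution and products $ax,xa$ ($a\in{\cal A},x\in{\cal A}_0$) extended by continuity. GNS construction: Hilbert space ${\cal H}_\omega$, linear $\lambda_\omega:{\cal A}\to{\cal H}_\omega$ with ${\cal D}:=\lambda_\omega({\cal A}_0)$ dense, $\langle\lambda_\omega(x),\lambda_\omega(a)\rangle=\omega(a^*x)$, and operators $\pi_\omega(x)$ on ${\cal D}$ given by $\pi_\omega(x)\lambda_\omega(a)=\lambda_\omega(xa)$, with $\pi_\omega(x)^\dagger:=\pi_\omega(x)^*\upharpoonright{\cal D}=\pi_\omega(x^* )$. Weak commutant: ${\mathfrak M}'_w=\{C\in{\cal B}({\cal H}_\omega):\langle X\xi,C^*\eta\rangle=\langle C\xi,X^\dagger\eta\rangle\ \forall X\in{\mathfrak M},\ \xi,\eta\in{\cal D}\}$. *)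

theory Defs
  imports "HOL-Analysis.Analysis"
begin

class scaleC = scaleR +
  fixes scaleC :: "complex \<Rightarrow> 'a \<Rightarrow> 'a" (infixr \<open>*\<^sub>C\<close> 75)
  assumes scaleR_scaleC: "scaleR r = scaleC (complex_of_real r)"

class complex_vector = scaleC + ab_group_add +
  assumes scaleC_add_right: "a *\<^sub>C (x + y) = a *\<^sub>C x + a *\<^sub>C y"
  and scaleC_add_left: "(a + b) *\<^sub>C x = a *\<^sub>C x + b *\<^sub>C x"
  and scaleC_scaleC: "a *\<^sub>C (b *\<^sub>C x) = (a * b) *\<^sub>C x"
  and scaleC_one: "1 *\<^sub>C x = x"

class complex_normed_vector = complex_vector + real_normed_vector +
  assumes norm_scaleC: "norm (a *\<^sub>C x) = cmod a * norm x"

text \<open>Inner product: linear in the first, conjugate-linear in the second argument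
  (the convention of the paper, where \<langle>\<lambda>(x),\<lambda>(a)\<rangle> = \<omega>(a* x)).\<close>
class complex_inner = complex_normed_vector +
  fixes cinner :: "'a \<Rightarrow> 'a \<Rightarrow> complex"
  assumes cinner_add_left: "cinner (x + y) z = cinner x z + cinner y z"
  and cinner_scaleC_left: "cinner (c *\<^sub>C x) y = c * cinner x y"
  and cinner_commute: "cinner y x = cnj (cinner x y)"
  and cinner_nonneg: "0 \<le> Re (cinner x x)"
  and norm_eq_sqrt_cinner: "norm x = sqrt (Re (cinner x x))"

class chilbert_space = complex_inner + complete_space

instantiation complex :: complex_vector
begin
definition scaleC_complex :: "complex \<Rightarrow> complex \<Rightarrow> complex" where
  "scaleC_complex = (*)"
instance by standard (auto simp: scaleC_complex_def scaleR_conv_of_real algebra_simps fun_eq_iff)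
end

definition clinear_on :: "'a::complex_vector set \<Rightarrow> ('a \<Rightarrow> 'b::complex_vector) \<Rightarrow> bool" where
  "clinear_on X f \<longleftrightarrow> (\<forall>x\<in>X. \<forall>y\<in>X. \<forall>c d. c *\<^sub>C x + d *\<^sub>C y \<in> X \<longrightarrow>
       f (c *\<^sub>C x + d *\<^sub>C y) = c *\<^sub>C f x + d *\<^sub>C f y)"

definition bounded_clinear_op :: "('h::complex_normed_vector \<Rightarrow> 'h) \<Rightarrow> bool" where
  "bounded_clinear_op T \<longleftrightarrow> clinear_on UNIV T \<and> (\<exists>K. \<forall>x. norm (T x) \<le> K * norm x)"

definition adj :: "('h::chilbert_space \<Rightarrow> 'h) \<Rightarrow> ('h \<Rightarrow> 'h)" where
  "adj T = (SOME S. bounded_clinear_op S \<and> (\<forall>\<xi> \<eta>. cinner (T \<xi>) \<eta> = cinner \<xi> (S \<eta>)))"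

definition commutant :: "('h::chilbert_space \<Rightarrow> 'h) set \<Rightarrow> ('h \<Rightarrow> 'h) set" where
  "commutant M = {C. bounded_clinear_op C \<and> (\<forall>X\<in>M. C \<circ> X = X \<circ> C)}"

definition von_neumann_algebra :: "('h::chilbert_space \<Rightarrow> 'h) set \<Rightarrow> bool" where
  "von_neumann_algebra M \<longleftrightarrow>
     (\<forall>X\<in>M. bounded_clinear_op X) \<and> id \<in> M \<and>
     (\<forall>X\<in>M. \<forall>Y\<in>M. (\<lambda>\<xi>. X \<xi> + Y \<xi>) \<in> M \<and> X \<circ> Y \<in> M \<and> adj X \<in> M) \<and>
     (\<forall>X\<in>M. \<forall>c. (\<lambda>\<xi>. c *\<^sub>C X \<xi>) \<in> M) \<and>
     commutant (commutant M) = M"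

definition orth_proj :: "'h::chilbert_space set \<Rightarrow> 'h \<Rightarrow> 'h" where
  "orth_proj K = (\<lambda>\<xi>. SOME k. k \<in> K \<and> (\<forall>y\<in>K. cinner (\<xi> - k) y = 0))"

definition seminorm_c :: "('a::complex_vector \<Rightarrow> real) \<Rightarrow> bool" where
  "seminorm_c p \<longleftrightarrow> (\<forall>x y. p (x + y) \<le> p x + p y) \<and> (\<forall>c x. p (c *\<^sub>C x) = cmod c * p x)"

text \<open>The locally convex topology \<tau> is given by a directed family S of seminorms
  (every locally convex topology admits such a family).\<close>
definition lc_continuous :: "('a::complex_vector \<Rightarrow> real) set \<Rightarrow> ('a \<Rightarrow> 'a) \<Rightarrow> bool" where
  "lc_continuous S T \<longleftrightarrow> (\<forall>x. \<forall>p\<in>S. \<forall>\<epsilon>>0. \<exists>q\<in>S. \<exists>\<delta>>0. \<forall>y. q (y - x) < \<delta> \<longrightarrow> p (T y - T x) < \<epsilon>)"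

definition lc_continuous_fun :: "('a::complex_vector \<Rightarrow> real) set \<Rightarrow> ('a \<Rightarrow> 'b::metric_space) \<Rightarrow> bool" where
  "lc_continuous_fun S f \<longleftrightarrow> (\<forall>x. \<forall>\<epsilon>>0. \<exists>q\<in>S. \<exists>\<delta>>0. \<forall>y. q (y - x) < \<delta> \<longrightarrow> dist (f y) (f x) < \<epsilon>)"

definition lc_cauchy_filter :: "('a::complex_vector \<Rightarrow> real) set \<Rightarrow> 'a filter \<Rightarrow> bool" where
  "lc_cauchy_filter S F \<longleftrightarrow> F \<noteq> bot \<and>
     (\<forall>p\<in>S. \<forall>\<epsilon>>0. eventually (\<lambda>(x, y). p (x - y) < \<epsilon>) (F \<times>\<^sub>F F))"

definition lc_converges :: "('a::complex_vector \<Rightarrow> real) set \<Rightarrow> 'a filter \<Rightarrow> 'a \<Rightarrow> bool" where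
  "lc_converges S F a \<longleftrightarrow> (\<forall>p\<in>S. \<forall>\<epsilon>>0. eventually (\<lambda>x. p (x - a) < \<epsilon>) F)"

text \<open>\<open>lcqsa A0 mul star S e\<close>: the (carrier type of) \<A> with the subspace \<A>0, the
  multiplication (meaningful when one factor lies in \<A>0: on \<A>0 \<times> \<A>0 it is the product of
  \<A>0; a x and x a for a \<in> \<A>, x \<in> \<A>0 are the extensions by continuity), the involution,
  the family of seminorms defining \<tau> and the identity e.\<close>
definition lcqsa :: "'a::complex_vector set \<Rightarrow> ('a \<Rightarrow> 'a \<Rightarrow> 'a) \<Rightarrow> ('a \<Rightarrow> 'a)
     \<Rightarrow> ('a \<Rightarrow> real) set \<Rightarrow> 'a \<Rightarrow> bool" where
  "lcqsa A0 mul star S e \<longleftrightarrow>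
     \<comment> \<open>\<tau> is a Hausdorff locally convex topology given by a directed family of seminorms\<close>
     S \<noteq> {} \<and> (\<forall>p\<in>S. seminorm_c p) \<and>
     (\<forall>p\<in>S. \<forall>q\<in>S. \<exists>r\<in>S. \<forall>x. max (p x) (q x) \<le> r x) \<and>
     (\<forall>x. (\<forall>p\<in>S. p x = 0) \<longrightarrow> x = 0) \<and>
     \<comment> \<open>\<A>0 is a *-algebra with identity e\<close>
     0 \<in> A0 \<and> (\<forall>x\<in>A0. \<forall>y\<in>A0. \<forall>c. x + y \<in> A0 \<and> c *\<^sub>C x \<in> A0 \<and> mul x y \<in> A0 \<and> star x \<in> A0) \<and>
     (\<forall>x\<in>A0. \<forall>y\<in>A0. \<forall>z\<in>A0. mul (mul x y) z = mul x (mul y z)) \<and>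
     (\<forall>x\<in>A0. \<forall>y\<in>A0. star (mul x y) = mul (star y) (star x)) \<and>
     e \<in> A0 \<and> (\<forall>a. mul e a = a \<and> mul a e = a) \<and>
     \<comment> \<open>involution on \<A>: conjugate-linear, involutive, continuous\<close>
     (\<forall>a b c d. star (c *\<^sub>C a + d *\<^sub>C b) = cnj c *\<^sub>C star a + cnj d *\<^sub>C star b) \<and>
     (\<forall>a. star (star a) = a) \<and> lc_continuous S star \<and>
     \<comment> \<open>products a x, x a (x \<in> \<A>0): linear in a and continuous in a;
         bilinearity on \<A>0 \<times> \<A>0 follows\<close>
     (\<forall>x\<in>A0. clinear_on UNIV (\<lambda>a. mul a x) \<and> clinear_on UNIV (\<lambda>a. mul x a) \<and>
              lc_continuous S (\<lambda>a. mul a x) \<and> lc_continuous S (\<lambda>a. mul x a)) \<and>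
     (\<forall>x\<in>A0. clinear_on A0 (\<lambda>y. mul x y)) \<and>
     \<comment> \<open>\<A> is the \<tau>-completion of \<A>0: \<A>0 is dense and \<A> is complete\<close>
     (\<forall>a. \<forall>p\<in>S. \<forall>\<epsilon>>0. \<exists>x\<in>A0. p (a - x) < \<epsilon>) \<and>
     (\<forall>F. lc_cauchy_filter S F \<longrightarrow> (\<exists>a. lc_converges S F a))"

text \<open>The operators \<pi>_\<omega>(x) (x \<in> \<A>) on
  D = \<lambda>(\<A>0) are \<pi>_\<omega>(x) \<lambda>(a) = \<lambda>(x a).\<close>
definition gns :: "'a::complex_vector set \<Rightarrow> ('a \<Rightarrow> 'a \<Rightarrow> 'a) \<Rightarrow> ('a \<Rightarrow> 'a) \<Rightarrow> ('a \<Rightarrow> complex)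
     \<Rightarrow> ('a \<Rightarrow> 'h::chilbert_space) \<Rightarrow> bool" where
  "gns A0 mul star \<omega> lam \<longleftrightarrow>
     clinear_on UNIV lam \<and> closure (lam ` A0) = UNIV \<and>
     (\<forall>x\<in>A0. \<forall>a. cinner (lam x) (lam a) = \<omega> (mul (star a) x))"

text \<open>Weak commutant of \<M> = \<pi>_\<omega>(\<A>), with X = \<pi>_\<omega>(x), X-dagger = \<pi>_\<omega>(x*),
  \<xi> = \<lambda>(a), \<eta> = \<lambda>(c) (a, c \<in> \<A>0).\<close>
definition weak_commutant_pi :: "'a::complex_vector set \<Rightarrow> ('a \<Rightarrow> 'a \<Rightarrow> 'a) \<Rightarrow> ('a \<Rightarrow> 'a)
     \<Rightarrow> ('a \<Rightarrow> 'h::chilbert_space) \<Rightarrow> ('h \<Rightarrow> 'h) set" where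
  "weak_commutant_pi A0 mul star lam =
     {C. bounded_clinear_op C \<and>
         (\<forall>x. \<forall>a\<in>A0. \<forall>c\<in>A0.
            cinner (lam (mul x a)) (adj C (lam c)) = cinner (C (lam a)) (lam (mul (star x) c)))}"

end

theory Submission
  imports Defs
begin


interpretation cvs: module "scaleC :: complex \<Rightarrow> 'a::complex_vector \<Rightarrow> 'a"
  by standard (auto simp: scaleC_add_right scaleC_add_left scaleC_scaleC scaleC_one)

lemma scaleC_zero_left[simp]: "0 *\<^sub>C (x::'a::complex_vector) = 0" by (rule cvs.scale_zero_left)
lemma scaleC_zero_right[simp]: "c *\<^sub>C (0::'a::complex_vector) = 0" by (rule cvs.scale_zero_right)
lemma scaleC_minus_right: "c *\<^sub>C (- x::'a::complex_vector) = - (c *\<^sub>C x)" by (rule cvs.scale_minus_right)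
lemma scaleC_diff_right: "c *\<^sub>C (x - y::'a::complex_vector) = c *\<^sub>C x - c *\<^sub>C y" by (rule cvs.scale_right_diff_distrib)
lemma scaleC_minus1: "(-1) *\<^sub>C (x::'a::complex_vector) = - x" by (metis cvs.scale_minus_left scaleC_one)

context complex_inner begin
end

lemma cinner_add_right: "cinner (x::'h::complex_inner) (y + z) = cinner x y + cinner x z"
proof -
  have "cinner x (y+z) = cnj (cinner (y+z) x)" by (rule cinner_commute)
  also have "\<dots> = cnj (cinner y x) + cnj (cinner z x)" by (simp add: cinner_add_left)
  also have "\<dots> = cinner x y + cinner x z" by (simp add: cinner_commute[of x y] cinner_commute[of x z])
  finally show ?thesis .
qed
lemma cinner_scaleC_right: "cinner (x::'h::complex_inner) (c *\<^sub>C y) = cnj c * cinner x y"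
proof -
  have "cinner x (c *\<^sub>C y) = cnj (cinner (c *\<^sub>C y) x)" by (rule cinner_commute)
  also have "\<dots> = cnj c * cnj (cinner y x)" by (simp add: cinner_scaleC_left)
  also have "\<dots> = cnj c * cinner x y" by (simp add: cinner_commute[of x y])
  finally show ?thesis .
qed
lemma cinner_zero_left[simp]: "cinner (0::'h::complex_inner) y = 0"
  using cinner_add_left[of "0::'h" 0 y] by simp
lemma cinner_zero_right[simp]: "cinner (x::'h::complex_inner) 0 = 0"
  using cinner_add_right[of x "0::'h" 0] by simp
lemma cinner_minus_left: "cinner (- x::'h::complex_inner) y = - cinner x y"
proof -
  have "cinner x y + cinner (-x) y = 0" using cinner_add_left[of x "-x" y] by simp
  then show ?thesis by (simp add: add_eq_0_iff)
qed
lemma cinner_minus_right: "cinner (x::'h::complex_inner) (- y) = - cinner x y"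
proof -
  have "cinner x y + cinner x (-y) = 0" using cinner_add_right[of x y "-y"] by simp
  then show ?thesis by (simp add: add_eq_0_iff)
qed
lemma cinner_diff_left: "cinner (x - y::'h::complex_inner) z = cinner x z - cinner y z"
  by (simp only: diff_conv_add_uminus cinner_add_left cinner_minus_left)
lemma cinner_diff_right: "cinner (x::'h::complex_inner) (y - z) = cinner x y - cinner x z"
  by (simp only: diff_conv_add_uminus cinner_add_right cinner_minus_right)

lemma cinner_self_Im: "Im (cinner (x::'h::complex_inner) x) = 0"
proof -
  have "Im (cinner x x) = Im (cnj (cinner x x))" using cinner_commute[of x x] by (rule arg_cong)
  then show ?thesis by simp
qed

lemma cinner_self_norm: "cinner (x::'h::complex_inner) x = complex_of_real ((norm x)^2)"
proof -
  have "(norm x)^2 = Re (cinner x x)" using norm_eq_sqrt_cinner[of x] cinner_nonneg[of x] by simp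
  then show ?thesis using cinner_self_Im[of x] by (intro complex_eqI) auto
qed

lemma cinner_self_zero: "cinner (x::'h::complex_inner) x = 0 \<longleftrightarrow> x = 0"
  by (simp add: cinner_self_norm)

lemma cinner_expand: "cinner (x - t *\<^sub>C y) (x - t *\<^sub>C y) =
   cinner x x - cnj t * cinner (x::'h::complex_inner) y - t * cinner y x + t * cnj t * cinner y y"
  by (simp add: cinner_diff_left cinner_diff_right cinner_scaleC_left cinner_scaleC_right algebra_simps)

lemma cauchy_schwarz: "cmod (cinner (x::'h::complex_inner) y) \<le> norm x * norm y"
proof (cases "y = 0")
  case True then show ?thesis by simp
next
  case False
  define n where "n = (norm y)^2"
  have n: "n > 0" using False by (simp add: n_def)
  define z where "z = cinner x y"
  have yx: "cinner y x = cnj z" by (simp add: z_def cinner_commute[of y x])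
  define t where "t = z / complex_of_real n"
  have e: "cinner (x - t *\<^sub>C y) (x - t *\<^sub>C y) = complex_of_real ((norm x)^2) - z * cnj z / complex_of_real n"
  proof -
    have yy: "cinner y y = complex_of_real n" by (simp add: cinner_self_norm n_def)
    have xy: "cinner x y = z" by (simp add: z_def)
    have nz: "complex_of_real n \<noteq> 0" using n by simp
    have ct: "cnj t = cnj z / complex_of_real n" by (simp add: t_def)
    show ?thesis unfolding cinner_expand yy xy yx ct cinner_self_norm[of x] using nz
      by (simp add: t_def field_simps)
  qed
  have "0 \<le> Re (cinner (x - t *\<^sub>C y) (x - t *\<^sub>C y))" by (rule cinner_nonneg)
  also have "\<dots> = (norm x)^2 - (cmod z)^2 / n"
  proof -
    have zz: "z * cnj z = complex_of_real ((cmod z)^2)"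
      by (rule complex_norm_square[symmetric])
    have "z * cnj z / complex_of_real n = complex_of_real ((cmod z)^2 / n)"
      unfolding zz by (simp add: of_real_divide)
    then show ?thesis unfolding e by (simp only: of_real_diff[symmetric] Re_complex_of_real)
  qed
  finally have "(cmod z)^2 \<le> (norm x)^2 * n" using n by (simp add: field_simps)
  then have "(cmod z)^2 \<le> (norm x * norm y)^2" by (simp add: n_def power_mult_distrib)
  then show ?thesis unfolding z_def by (rule power2_le_imp_le) simp
qed

lemma cinner_scaleR_left: "cinner (r *\<^sub>R x) (y::'h::complex_inner) = of_real r * cinner x y"
  by (simp add: scaleR_scaleC cinner_scaleC_left)
lemma cinner_scaleR_right: "cinner (x::'h::complex_inner) (r *\<^sub>R y) = of_real r * cinner x y"
  by (simp add: scaleR_scaleC cinner_scaleC_right)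

lemma bounded_linear_cinner_left: "bounded_linear (\<lambda>x. cinner (x::'h::complex_inner) y)"
  apply (rule bounded_linear_intro[where K="norm y"])
  using cauchy_schwarz by (auto simp: cinner_add_left cinner_scaleR_left scaleR_conv_of_real mult.commute)
lemma bounded_linear_cinner_right: "bounded_linear (\<lambda>y. cinner (x::'h::complex_inner) y)"
  apply (rule bounded_linear_intro[where K="norm x"])
    apply (auto simp: cinner_add_right cinner_scaleR_right scaleR_conv_of_real)
  using cauchy_schwarz[of x] by (simp add: mult.commute)

lemma bounded_linear_scaleC: "bounded_linear (\<lambda>x. c *\<^sub>C (x::'h::complex_normed_vector))"
proof (rule bounded_linear_intro[where K="cmod c"])
  fix x y :: 'h show "c *\<^sub>C (x + y) = c *\<^sub>C x + c *\<^sub>C y" by (rule scaleC_add_right)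
next
  fix r and x :: 'h
  show "c *\<^sub>C (r *\<^sub>R x) = r *\<^sub>R (c *\<^sub>C x)"
    unfolding scaleR_scaleC scaleC_scaleC by (simp add: mult.commute)
next
  fix x :: 'h show "norm (c *\<^sub>C x) \<le> norm x * cmod c" by (simp add: norm_scaleC mult.commute)
qed

lemma cinner_ext: "(\<And>z. cinner (x::'h::complex_inner) z = cinner y z) \<Longrightarrow> x = y"
proof -
  assume h: "\<And>z. cinner x z = cinner y z"
  have "cinner (x - y) (x - y) = 0" unfolding cinner_diff_left using h by simp
  then show "x = y" unfolding cinner_self_zero by simp
qed


lemma cinner_ext2: "(\<And>z. cinner z (x::'h::complex_inner) = cinner z y) \<Longrightarrow> x = y"
proof -
  assume h: "\<And>z. cinner z x = cinner z y"
  show "x = y"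
  proof (rule cinner_ext)
    fix z
    have "cinner x z = cnj (cinner z x)" by (rule cinner_commute)
    also have "\<dots> = cnj (cinner z y)" using h by simp
    also have "\<dots> = cinner y z" by (rule cinner_commute[symmetric])
    finally show "cinner x z = cinner y z" .
  qed
qed

lemma norm_sq_Re: "(norm (x::'h::complex_inner))^2 = Re (cinner x x)"
  by (simp add: cinner_self_norm)

lemma proj_expand:
  assumes "(y::'h::complex_inner) \<noteq> 0"
  shows "(norm (x - (cinner x y / complex_of_real ((norm y)^2)) *\<^sub>C y))^2 = (norm x)^2 - (cmod (cinner x y))^2 / (norm y)^2"
proof -
  define n where "n = (norm y)^2"
  have n: "n > 0" using assms by (simp add: n_def)
  define z where "z = cinner x y"
  have yx: "cinner y x = cnj z" by (simp add: z_def cinner_commute[of y x])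
  define t where "t = z / complex_of_real n"
  have e: "cinner (x - t *\<^sub>C y) (x - t *\<^sub>C y) = complex_of_real ((norm x)^2) - z * cnj z / complex_of_real n"
  proof -
    have yy: "cinner y y = complex_of_real n" by (simp add: cinner_self_norm n_def)
    have xy: "cinner x y = z" by (simp add: z_def)
    have nz: "complex_of_real n \<noteq> 0" using n by simp
    have ct: "cnj t = cnj z / complex_of_real n" by (simp add: t_def)
    show ?thesis unfolding cinner_expand yy xy yx ct cinner_self_norm[of x] using nz
      by (simp add: t_def field_simps)
  qed
  have zz: "z * cnj z = complex_of_real ((cmod z)^2)"
    by (rule complex_norm_square[symmetric])
  have "z * cnj z / complex_of_real n = complex_of_real ((cmod z)^2 / n)"
    unfolding zz by (simp add: of_real_divide)
  then have "Re (cinner (x - t *\<^sub>C y) (x - t *\<^sub>C y)) = (norm x)^2 - (cmod z)^2 / n"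
    unfolding e by (simp only: of_real_diff[symmetric] Re_complex_of_real)
  then show ?thesis unfolding norm_sq_Re t_def z_def n_def .
qed

lemma parallelogram: "(norm ((a::'h::complex_inner) + b))^2 + (norm (a - b))^2 = 2 * (norm a)^2 + 2 * (norm b)^2"
proof -
  have "complex_of_real ((norm (a + b))^2 + (norm (a - b))^2) = cinner (a+b) (a+b) + cinner (a-b) (a-b)"
    by (simp add: cinner_self_norm)
  also have "\<dots> = 2 * cinner a a + 2 * cinner b b"
    by (simp add: cinner_add_left cinner_add_right cinner_diff_left cinner_diff_right)
  also have "\<dots> = complex_of_real (2 * (norm a)^2 + 2 * (norm b)^2)"
    by (simp add: cinner_self_norm)
  finally show ?thesis by (simp only: of_real_eq_iff)
qed

definition csubspace :: "'h::complex_vector set \<Rightarrow> bool" where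
  "csubspace V \<longleftrightarrow> 0 \<in> V \<and> (\<forall>x\<in>V. \<forall>y\<in>V. x + y \<in> V) \<and> (\<forall>x\<in>V. \<forall>c. c *\<^sub>C x \<in> V)"

lemma csubspace_diff: "csubspace V \<Longrightarrow> x \<in> V \<Longrightarrow> y \<in> V \<Longrightarrow> x - y \<in> V"
proof -
  assume a: "csubspace V" "x \<in> V" "y \<in> V"
  then have "(-1) *\<^sub>C y \<in> V" unfolding csubspace_def by blast
  then have "- y \<in> V" by (simp only: scaleC_minus1)
  then show "x - y \<in> V" using a unfolding csubspace_def by (metis diff_conv_add_uminus)
qed

lemma csubspace_closure:
  assumes "csubspace (V::'h::complex_normed_vector set)" shows "csubspace (closure V)"
  unfolding csubspace_def
proof (intro conjI ballI allI)
  show "0 \<in> closure V" using assms closure_subset unfolding csubspace_def by blast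
next
  fix x y assume "x \<in> closure V" "y \<in> closure V"
  then obtain a b where a: "\<forall>n. a n \<in> V" "a \<longlonglongrightarrow> x" and b: "\<forall>n. b n \<in> V" "b \<longlonglongrightarrow> y"
    unfolding closure_sequential by blast
  have "(\<lambda>n. a n + b n) \<longlonglongrightarrow> x + y" using a b by (intro tendsto_add) auto
  moreover have "\<forall>n. a n + b n \<in> V" using a b assms unfolding csubspace_def by blast
  ultimately show "x + y \<in> closure V" unfolding closure_sequential by (intro exI[where x="\<lambda>n. a n + b n"]) simp
next
  fix x c assume "x \<in> closure V"
  then obtain a where a: "\<forall>n. a n \<in> V" "a \<longlonglongrightarrow> x"
    unfolding closure_sequential by blast
  have "(\<lambda>n. c *\<^sub>C a n) \<longlonglongrightarrow> c *\<^sub>C x" using a bounded_linear.tendsto[OF bounded_linear_scaleC] by blast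
  moreover have "\<forall>n. c *\<^sub>C a n \<in> V" using a assms unfolding csubspace_def by blast
  ultimately show "c *\<^sub>C x \<in> closure V" unfolding closure_sequential by (intro exI[where x="\<lambda>n. c *\<^sub>C a n"]) simp
qed

lemma proj_exists:
  fixes K :: "'h::chilbert_space set"
  assumes K: "csubspace K" "closed K"
  shows "\<exists>k\<in>K. \<forall>y\<in>K. cinner (\<xi> - k) y = 0"
proof -
  define f where "f k = (norm (\<xi> - k))^2" for k
  define d where "d = Inf (f ` K)"
  have K0: "0 \<in> K" using K unfolding csubspace_def by blast
  have bdd: "bdd_below (f ` K)" unfolding f_def by (rule bdd_belowI[where m=0]) auto
  have dle: "\<And>k. k \<in> K \<Longrightarrow> d \<le> f k" unfolding d_def using bdd by (auto intro: cInf_lower)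
  have "\<forall>n. \<exists>k\<in>K. f k < d + inverse (real (Suc n))"
  proof
    fix n
    have i: "Inf (f ` K) < d + inverse (real (Suc n))" unfolding d_def by simp
    have ne: "f ` K \<noteq> {}" using K0 by blast
    obtain v where "v \<in> f ` K" "v < d + inverse (real (Suc n))"
      using cInf_lessD[OF ne i] by blast
    then show "\<exists>k\<in>K. f k < d + inverse (real (Suc n))" by blast
  qed
  then obtain s where s: "\<And>n. s n \<in> K" "\<And>n. f (s n) < d + inverse (real (Suc n))"
    by metis
  have key: "(norm (s m - s n))^2 \<le> 2 * inverse (real (Suc m)) + 2 * inverse (real (Suc n))" for m n
  proof -
    define mid where "mid = (complex_of_real (1/2)) *\<^sub>C (s m + s n)"
    have midK: "mid \<in> K" using K s unfolding mid_def csubspace_def by blast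
    have "2 *\<^sub>R mid = (complex_of_real 2) *\<^sub>C mid" by (simp only: scaleR_scaleC)
    also have "\<dots> = s m + s n" unfolding mid_def scaleC_scaleC
      by (simp del: of_real_numeral add: of_real_mult[symmetric] scaleC_one)
    finally have m2: "2 *\<^sub>R mid = s m + s n" .
    have "(\<xi> - s m) + (\<xi> - s n) = 2 *\<^sub>R (\<xi> - mid)"
      by (simp only: scaleR_diff_right m2) (simp add: scaleR_2 algebra_simps)
    then have "(norm ((\<xi> - s m) + (\<xi> - s n)))^2 = 4 * f mid"
      by (simp add: f_def power_mult_distrib)
    moreover have "(\<xi> - s m) - (\<xi> - s n) = - (s m - s n)" by simp
    ultimately have "4 * f mid + (norm (s m - s n))^2 = 2 * f (s m) + 2 * f (s n)"
      using parallelogram[of "\<xi> - s m" "\<xi> - s n"] by (simp add: f_def norm_minus_commute)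
    then show ?thesis using dle[OF midK] s(2)[of m] s(2)[of n] by linarith
  qed
  have "Cauchy s"
  proof (rule metric_CauchyI)
    fix e :: real assume e: "e > 0"
    obtain N where N: "inverse (real (Suc N)) < e^2 / 4"
      using reals_Archimedean[of "e^2/4"] e by auto
    show "\<exists>M. \<forall>m\<ge>M. \<forall>n\<ge>M. dist (s m) (s n) < e"
    proof (intro exI allI impI)
      fix m n assume mn: "N \<le> m" "N \<le> n"
      have "inverse (real (Suc m)) \<le> inverse (real (Suc N))" using mn by (simp add: field_simps)
      moreover have "inverse (real (Suc n)) \<le> inverse (real (Suc N))" using mn by (simp add: field_simps)
      ultimately have "(norm (s m - s n))^2 < e^2" using key[of m n] N by linarith
      then have "norm (s m - s n) < e" using e by (simp add: power_less_imp_less_base)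
      then show "dist (s m) (s n) < e" by (simp add: dist_norm)
    qed
  qed
  then obtain k where k: "s \<longlonglongrightarrow> k" using Cauchy_convergent_iff convergent_def by blast
  have kK: "k \<in> K" using closed_sequentially[OF K(2) s(1) k] .
  have fk: "f k \<le> d"
  proof (rule LIMSEQ_le)
    show "(\<lambda>n. f (s n)) \<longlonglongrightarrow> f k" unfolding f_def by (intro tendsto_intros k)
    show "(\<lambda>n. d + inverse (real (Suc n))) \<longlonglongrightarrow> d"
      using tendsto_add[OF tendsto_const LIMSEQ_inverse_real_of_nat] by simp
    show "\<exists>N. \<forall>n\<ge>N. f (s n) \<le> d + inverse (real (Suc n))" using s(2) less_imp_le by blast
  qed
  show ?thesis
  proof (intro bexI[OF _ kK] ballI)
    fix y assume yK: "y \<in> K"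
    show "cinner (\<xi> - k) y = 0"
    proof (cases "y = 0")
      case True then show ?thesis by simp
    next
      case False
      define t where "t = cinner (\<xi> - k) y / complex_of_real ((norm y)^2)"
      have "k + t *\<^sub>C y \<in> K" using K kK yK unfolding csubspace_def by blast
      then have "f k \<le> f (k + t *\<^sub>C y)" using fk dle by fastforce
      also have "f (k + t *\<^sub>C y) = (norm (\<xi> - k))^2 - (cmod (cinner (\<xi> - k) y))^2 / (norm y)^2"
        unfolding f_def diff_diff_eq[symmetric] t_def by (rule proj_expand[OF False])
      finally have "(cmod (cinner (\<xi> - k) y))^2 / (norm y)^2 \<le> 0" unfolding f_def by simp
      then have "(cmod (cinner (\<xi> - k) y))^2 \<le> 0" using False
        by (simp add: divide_le_0_iff)
      then show ?thesis by simp
    qed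
  qed
qed

lemma proj_unique:
  fixes K :: "'h::complex_inner set"
  assumes "csubspace K" "k \<in> K" "\<forall>y\<in>K. cinner (\<xi> - k) y = 0"
     "k' \<in> K" "\<forall>y\<in>K. cinner (\<xi> - k') y = 0"
  shows "k = k'"
proof -
  have d: "k' - k \<in> K" using csubspace_diff assms by blast
  have "cinner (k' - k) (k' - k) = cinner (\<xi> - k) (k' - k) - cinner (\<xi> - k') (k' - k)"
    by (simp add: cinner_diff_left)
  also have "\<dots> = 0" using assms d by simp
  finally show ?thesis unfolding cinner_self_zero by simp
qed


section \<open>Bounded operators\<close>

lemma bclin_lin: "bounded_clinear_op T \<Longrightarrow> T (c *\<^sub>C x + d *\<^sub>C y) = c *\<^sub>C T x + d *\<^sub>C T y"
  unfolding bounded_clinear_op_def clinear_on_def by blast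

lemma bclin_add: "bounded_clinear_op T \<Longrightarrow> T (x + y) = T x + T y"
  using bclin_lin[of T 1 x 1 y] by (simp add: scaleC_one)

lemma bclin_scale: "bounded_clinear_op T \<Longrightarrow> T (c *\<^sub>C x) = c *\<^sub>C T x"
  using bclin_lin[of T c x 0 x] by simp

lemma bclin_zero: "bounded_clinear_op T \<Longrightarrow> T 0 = 0"
  using bclin_scale[of T 0 0] by simp

lemma bclin_minus: "bounded_clinear_op T \<Longrightarrow> T (- x) = - T x"
  using bclin_scale[of T "-1" x] by (simp only: scaleC_minus1)

lemma bclin_diff: "bounded_clinear_op T \<Longrightarrow> T (x - y) = T x - T y"
  by (simp only: diff_conv_add_uminus bclin_add bclin_minus)

lemma bclin_bound: "bounded_clinear_op T \<Longrightarrow> \<exists>K\<ge>0. \<forall>x. norm (T x) \<le> K * norm x"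
proof -
  assume "bounded_clinear_op T"
  then obtain K where K: "\<And>x. norm (T x) \<le> K * norm x" unfolding bounded_clinear_op_def by blast
  have "norm (T x) \<le> max K 0 * norm x" for x
    using K[of x] by (metis max.cobounded1 mult_right_mono norm_ge_zero order_trans)
  then show ?thesis by (intro exI[of _ "max K 0"]) auto
qed

lemma bclin_bounded_linear: "bounded_clinear_op (T::'h::complex_normed_vector \<Rightarrow> 'h) \<Longrightarrow> bounded_linear T"
proof -
  assume T: "bounded_clinear_op T"
  then obtain K where K: "K \<ge> 0" "\<And>x. norm (T x) \<le> K * norm x" using bclin_bound by blast
  show ?thesis
  proof (rule bounded_linear_intro[where K=K])
    show "T (x + y) = T x + T y" for x y using bclin_add[OF T] .
    show "T (r *\<^sub>R x) = r *\<^sub>R T x" for r x by (simp only: scaleR_scaleC bclin_scale[OF T])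
    show "norm (T x) \<le> norm x * K" for x using K by (simp add: mult.commute)
  qed
qed

lemma bclin_cont: "bounded_clinear_op (T::'h::complex_normed_vector \<Rightarrow> 'h) \<Longrightarrow> continuous_on UNIV T"
  by (intro linear_continuous_on bounded_linear.linear[OF bclin_bounded_linear] bclin_bounded_linear)

lemma bclin_id: "bounded_clinear_op id"
  unfolding bounded_clinear_op_def clinear_on_def by (auto intro: exI[of _ 1])

lemma bclin_comp: "bounded_clinear_op X \<Longrightarrow> bounded_clinear_op Y \<Longrightarrow> bounded_clinear_op (X \<circ> Y)"
proof -
  assume X: "bounded_clinear_op X" and Y: "bounded_clinear_op Y"
  obtain K where K: "K \<ge> 0" "\<And>x. norm (X x) \<le> K * norm x" using bclin_bound[OF X] by blast
  obtain L where L: "L \<ge> 0" "\<And>x. norm (Y x) \<le> L * norm x" using bclin_bound[OF Y] by blast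
  have "norm (X (Y x)) \<le> (K * L) * norm x" for x
  proof -
    have "norm (X (Y x)) \<le> K * norm (Y x)" by (rule K)
    also have "\<dots> \<le> K * (L * norm x)" using K L by (simp add: mult_left_mono)
    finally show ?thesis by (simp add: mult.assoc)
  qed
  then show ?thesis unfolding bounded_clinear_op_def clinear_on_def
    by (auto simp: bclin_lin[OF X] bclin_lin[OF Y])
qed

lemma bclin_plus: "bounded_clinear_op X \<Longrightarrow> bounded_clinear_op Y \<Longrightarrow> bounded_clinear_op (\<lambda>\<xi>. X \<xi> + Y \<xi>)"
proof -
  assume X: "bounded_clinear_op X" and Y: "bounded_clinear_op Y"
  obtain K where K: "K \<ge> 0" "\<And>x. norm (X x) \<le> K * norm x" using bclin_bound[OF X] by blast
  obtain L where L: "L \<ge> 0" "\<And>x. norm (Y x) \<le> L * norm x" using bclin_bound[OF Y] by blast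
  have "norm (X x + Y x) \<le> (K + L) * norm x" for x
    using norm_triangle_ineq[of "X x" "Y x"] K(2)[of x] L(2)[of x] by (simp add: algebra_simps)
  moreover have "X (c *\<^sub>C x + d *\<^sub>C y) + Y (c *\<^sub>C x + d *\<^sub>C y) = c *\<^sub>C (X x + Y x) + d *\<^sub>C (X y + Y y)" for c d x y
    by (simp add: bclin_lin[OF X] bclin_lin[OF Y] scaleC_add_right algebra_simps)
  ultimately show ?thesis unfolding bounded_clinear_op_def clinear_on_def by blast
qed

lemma bclin_smult: "bounded_clinear_op X \<Longrightarrow> bounded_clinear_op (\<lambda>\<xi>. c *\<^sub>C X \<xi>)"
proof -
  assume X: "bounded_clinear_op X"
  obtain K where K: "K \<ge> 0" "\<And>x. norm (X x) \<le> K * norm x" using bclin_bound[OF X] by blast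
  have "norm (c *\<^sub>C X x) \<le> (cmod c * K) * norm x" for x
    using K(2)[of x] by (simp add: norm_scaleC mult.assoc mult_left_mono)
  moreover have "c *\<^sub>C X (a *\<^sub>C x + b *\<^sub>C y) = a *\<^sub>C (c *\<^sub>C X x) + b *\<^sub>C (c *\<^sub>C X y)" for a b x y
    by (simp add: bclin_lin[OF X] scaleC_add_right scaleC_scaleC mult.commute)
  ultimately show ?thesis unfolding bounded_clinear_op_def clinear_on_def by blast
qed

section \<open>Riesz representation and adjoints\<close>

lemma riesz:
  fixes f :: "'h::chilbert_space \<Rightarrow> complex"
  assumes add: "\<And>x y. f (x + y) = f x + f y" and scal: "\<And>c x. f (c *\<^sub>C x) = c * f x"
    and bnd: "\<And>x. cmod (f x) \<le> M * norm x"
  shows "\<exists>y. \<forall>x. f x = cinner x y"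
proof (cases "\<forall>x. f x = 0")
  case True then show ?thesis by (intro exI[of _ 0]) simp
next
  case False
  then obtain u where u: "f u \<noteq> 0" by blast
  define Z where "Z = {x. f x = 0}"
  have f0: "f 0 = 0" using scal[of 0 0] by simp
  have fm: "f (- x) = - f x" for x using scal[of "-1" x] by (simp only: scaleC_minus1) simp
  have fd: "f (x - y) = f x - f y" for x y by (simp only: diff_conv_add_uminus add fm)
  have sZ: "csubspace Z" unfolding csubspace_def Z_def by (auto simp: add scal f0)
  have bl: "bounded_linear f"
  proof (rule bounded_linear_intro[where K=M])
    show "f (x + y) = f x + f y" for x y by (rule add)
    show "f (r *\<^sub>R x) = r *\<^sub>R f x" for r x by (simp only: scaleR_scaleC scal) (simp add: scaleC_complex_def)
    show "norm (f x) \<le> norm x * M" for x using bnd[of x] by (simp add: mult.commute)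
  qed
  have cZ: "closed Z" unfolding Z_def
    by (rule closed_Collect_eq) (auto intro: linear_continuous_on bounded_linear.linear[OF bl] bl)
  obtain p where p: "p \<in> Z" "\<forall>w\<in>Z. cinner (u - p) w = 0" using proj_exists[OF sZ cZ] by blast
  define z where "z = u - p"
  have fz: "f z = f u" using p(1) unfolding z_def Z_def by (simp add: fd)
  have zz: "cinner z z \<noteq> 0" using fz u f0 cinner_self_zero by metis
  have rel: "cinner x z = (f x / f z) * cinner z z" for x
  proof -
    define w where "w = x - (f x / f z) *\<^sub>C z"
    have "f w = 0" unfolding w_def fd scal using fz u by simp
    then have "cinner z w = 0" using p(2) unfolding Z_def z_def by simp
    then have "cinner w z = 0" using cinner_commute[of w z] by simp
    then show ?thesis unfolding w_def cinner_diff_left cinner_scaleC_left by simp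
  qed
  define y where "y = (cnj (f z) / cnj (cinner z z)) *\<^sub>C z"
  have "f x = cinner x y" for x
  proof -
    have "cinner x y = f z / cinner z z * cinner x z"
      unfolding y_def cinner_scaleC_right by simp
    also have "\<dots> = f x" unfolding rel[of x] using zz fz u by simp
    finally show ?thesis by simp
  qed
  then show ?thesis by blast
qed

lemma adj_exists:
  fixes T :: "'h::chilbert_space \<Rightarrow> 'h"
  assumes T: "bounded_clinear_op T"
  shows "\<exists>S. bounded_clinear_op S \<and> (\<forall>\<xi> \<eta>. cinner (T \<xi>) \<eta> = cinner \<xi> (S \<eta>))"
proof -
  obtain K where K: "K \<ge> 0" "\<And>x. norm (T x) \<le> K * norm x" using bclin_bound[OF T] by blast
  have "\<forall>\<eta>. \<exists>y. \<forall>\<xi>. cinner (T \<xi>) \<eta> = cinner \<xi> y"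
  proof
    fix \<eta>
    show "\<exists>y. \<forall>\<xi>. cinner (T \<xi>) \<eta> = cinner \<xi> y"
    proof (rule riesz[where M="K * norm \<eta>"])
      show "cinner (T (x + y)) \<eta> = cinner (T x) \<eta> + cinner (T y) \<eta>" for x y
        by (simp add: bclin_add[OF T] cinner_add_left)
      show "cinner (T (c *\<^sub>C x)) \<eta> = c * cinner (T x) \<eta>" for c x
        by (simp add: bclin_scale[OF T] cinner_scaleC_left)
      show "cmod (cinner (T x) \<eta>) \<le> K * norm \<eta> * norm x" for x
      proof -
        have "cmod (cinner (T x) \<eta>) \<le> norm (T x) * norm \<eta>" by (rule cauchy_schwarz)
        also have "\<dots> \<le> K * norm x * norm \<eta>" using K by (simp add: mult_right_mono)
        finally show ?thesis by (simp add: mult_ac)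
      qed
    qed
  qed
  then obtain S where S: "\<And>\<xi> \<eta>. cinner (T \<xi>) \<eta> = cinner \<xi> (S \<eta>)" by metis
  have lin: "S (c *\<^sub>C x + d *\<^sub>C y) = c *\<^sub>C S x + d *\<^sub>C S y" for c d x y
  proof (rule cinner_ext2)
    fix z
    show "cinner z (S (c *\<^sub>C x + d *\<^sub>C y)) = cinner z (c *\<^sub>C S x + d *\<^sub>C S y)"
      unfolding S[symmetric] by (simp add: cinner_add_right cinner_scaleC_right S)
  qed
  have bnd: "norm (S \<eta>) \<le> K * norm \<eta>" for \<eta>
  proof (cases "S \<eta> = 0")
    case True then show ?thesis using K by simp
  next
    case False
    have "(norm (S \<eta>))^2 = Re (cinner (S \<eta>) (S \<eta>))" by (rule norm_sq_Re)
    also have "\<dots> = Re (cinner (T (S \<eta>)) \<eta>)" by (simp add: S)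
    also have "\<dots> \<le> cmod (cinner (T (S \<eta>)) \<eta>)" by (rule complex_Re_le_cmod)
    also have "\<dots> \<le> norm (T (S \<eta>)) * norm \<eta>" by (rule cauchy_schwarz)
    also have "\<dots> \<le> K * norm (S \<eta>) * norm \<eta>" using K by (simp add: mult_right_mono)
    finally have "norm (S \<eta>) * norm (S \<eta>) \<le> (K * norm \<eta>) * norm (S \<eta>)"
      by (simp add: power2_eq_square mult_ac)
    then show ?thesis using False by simp
  qed
  have "bounded_clinear_op S" unfolding bounded_clinear_op_def clinear_on_def using lin bnd by blast
  then show ?thesis using S by blast
qed

lemma adj_spec:
  fixes T :: "'h::chilbert_space \<Rightarrow> 'h"
  assumes "bounded_clinear_op T"
  shows "bounded_clinear_op (adj T)" "\<And>\<xi> \<eta>. cinner (T \<xi>) \<eta> = cinner \<xi> (adj T \<eta>)"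
proof -
  have "bounded_clinear_op (adj T) \<and> (\<forall>\<xi> \<eta>. cinner (T \<xi>) \<eta> = cinner \<xi> (adj T \<eta>))"
    unfolding adj_def by (rule someI_ex[OF adj_exists[OF assms]])
  then show "bounded_clinear_op (adj T)" "\<And>\<xi> \<eta>. cinner (T \<xi>) \<eta> = cinner \<xi> (adj T \<eta>)" by auto
qed

lemma adj_unique:
  fixes T :: "'h::chilbert_space \<Rightarrow> 'h"
  assumes "bounded_clinear_op T" "\<And>\<xi> \<eta>. cinner (T \<xi>) \<eta> = cinner \<xi> (S \<eta>)"
  shows "adj T = S"
proof
  fix \<eta>
  show "adj T \<eta> = S \<eta>"
    by (rule cinner_ext2) (simp add: adj_spec(2)[OF assms(1), symmetric] assms(2))
qed


section \<open>Orthogonal projections\<close>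

lemma orth_proj_spec:
  fixes K :: "'h::chilbert_space set"
  assumes "csubspace K" "closed K"
  shows "orth_proj K \<xi> \<in> K" "\<forall>y\<in>K. cinner (\<xi> - orth_proj K \<xi>) y = 0"
proof -
  have "\<exists>k. k \<in> K \<and> (\<forall>y\<in>K. cinner (\<xi> - k) y = 0)" using proj_exists[OF assms] by blast
  from someI_ex[OF this] show "orth_proj K \<xi> \<in> K" "\<forall>y\<in>K. cinner (\<xi> - orth_proj K \<xi>) y = 0"
    unfolding orth_proj_def by auto
qed

lemma orth_proj_eq:
  fixes K :: "'h::chilbert_space set"
  assumes "csubspace K" "closed K" "k \<in> K" "\<forall>y\<in>K. cinner (\<xi> - k) y = 0"
  shows "orth_proj K \<xi> = k"
  using proj_unique[OF assms(1) orth_proj_spec[OF assms(1,2)] assms(3,4)] .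

lemma orth_proj_bclin:
  fixes K :: "'h::chilbert_space set"
  assumes K: "csubspace K" "closed K"
  shows "bounded_clinear_op (orth_proj K)"
proof -
  let ?P = "orth_proj K"
  have lin: "?P (c *\<^sub>C x + d *\<^sub>C y) = c *\<^sub>C ?P x + d *\<^sub>C ?P y" for c d x y
  proof (rule orth_proj_eq[OF K])
    show "c *\<^sub>C ?P x + d *\<^sub>C ?P y \<in> K" using K orth_proj_spec(1)[OF K] unfolding csubspace_def by blast
    show "\<forall>z\<in>K. cinner (c *\<^sub>C x + d *\<^sub>C y - (c *\<^sub>C ?P x + d *\<^sub>C ?P y)) z = 0"
    proof
      fix z assume z: "z \<in> K"
      have "c *\<^sub>C x + d *\<^sub>C y - (c *\<^sub>C ?P x + d *\<^sub>C ?P y) = c *\<^sub>C (x - ?P x) + d *\<^sub>C (y - ?P y)"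
        by (simp add: scaleC_diff_right algebra_simps)
      then show "cinner (c *\<^sub>C x + d *\<^sub>C y - (c *\<^sub>C ?P x + d *\<^sub>C ?P y)) z = 0"
        using orth_proj_spec(2)[OF K, of x] orth_proj_spec(2)[OF K, of y] z
        by (simp add: cinner_add_left cinner_scaleC_left)
    qed
  qed
  have bnd: "norm (?P x) \<le> 1 * norm x" for x
  proof (cases "?P x = 0")
    case True then show ?thesis by simp
  next
    case False
    have o: "cinner (x - ?P x) (?P x) = 0" using orth_proj_spec[OF K, of x] by blast
    have "(norm (?P x))^2 = Re (cinner (?P x) (?P x))" by (rule norm_sq_Re)
    also have "cinner (?P x) (?P x) = cinner x (?P x)" using o by (simp add: cinner_diff_left)
    also have "Re (cinner x (?P x)) \<le> cmod (cinner x (?P x))" by (rule complex_Re_le_cmod)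
    also have "\<dots> \<le> norm x * norm (?P x)" by (rule cauchy_schwarz)
    finally have "norm (?P x) * norm (?P x) \<le> norm x * norm (?P x)" by (simp add: power2_eq_square)
    then show ?thesis using False by simp
  qed
  show ?thesis unfolding bounded_clinear_op_def clinear_on_def using lin bnd by blast
qed

section \<open>Density arguments in the Hilbert space\<close>

lemma dense_eq:
  fixes f g :: "'h::topological_space \<Rightarrow> 'b::t2_space"
  assumes "closure D = UNIV" "continuous_on UNIV f" "continuous_on UNIV g" "\<And>x. x \<in> D \<Longrightarrow> f x = g x"
  shows "f x = g x"
proof -
  have "closure D \<subseteq> {x. f x = g x}"
    using assms by (intro closure_minimal) (auto intro: closed_Collect_eq)
  then show ?thesis using assms(1) by auto
qed

lemma dense_le:
  fixes f g :: "'h::topological_space \<Rightarrow> real"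
  assumes "closure D = UNIV" "continuous_on UNIV f" "continuous_on UNIV g" "\<And>x. x \<in> D \<Longrightarrow> f x \<le> g x"
  shows "f x \<le> g x"
proof -
  have "closure D \<subseteq> {x. f x \<le> g x}"
    using assms by (intro closure_minimal) (auto intro: closed_Collect_le)
  then show ?thesis using assms(1) by auto
qed

lemma cont_cinner_left: "continuous_on UNIV f \<Longrightarrow> continuous_on UNIV (\<lambda>x. cinner (f x) (y::'h::complex_inner))"
  by (rule continuous_on_compose2[OF linear_continuous_on[OF bounded_linear_cinner_left]]) auto
lemma cont_cinner_right: "continuous_on UNIV f \<Longrightarrow> continuous_on UNIV (\<lambda>x. cinner (y::'h::complex_inner) (f x))"
  by (rule continuous_on_compose2[OF linear_continuous_on[OF bounded_linear_cinner_right]]) auto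
lemma cont_scaleC: "continuous_on UNIV f \<Longrightarrow> continuous_on UNIV (\<lambda>x. c *\<^sub>C (f x::'h::complex_normed_vector))"
  by (rule continuous_on_compose2[OF linear_continuous_on[OF bounded_linear_scaleC]]) auto
lemma cont_bclin: "bounded_clinear_op T \<Longrightarrow> continuous_on UNIV f \<Longrightarrow> continuous_on UNIV (\<lambda>x. T (f x::'h::complex_normed_vector))"
  by (rule continuous_on_compose2[OF bclin_cont]) auto

lemma op_eq_dense:
  fixes U V :: "'h::chilbert_space \<Rightarrow> 'h"
  assumes D: "closure D = UNIV" and U: "bounded_clinear_op U" and V: "bounded_clinear_op V"
    and h: "\<And>a c. a \<in> D \<Longrightarrow> c \<in> D \<Longrightarrow> cinner (U a) c = cinner (V a) c"
  shows "U = V"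
proof
  fix \<xi>
  have "U a = V a" if a: "a \<in> D" for a
  proof (rule cinner_ext)
    fix z
    show "cinner (U a) z = cinner (V a) z"
      by (rule dense_eq[OF D]) (auto intro!: cont_cinner_right continuous_on_id h a)
  qed
  then show "U \<xi> = V \<xi>"
    by (rule dense_eq[OF D bclin_cont[OF U] bclin_cont[OF V]])
qed

section \<open>Commutants\<close>

lemma commutant_antimono: "A \<subseteq> B \<Longrightarrow> commutant B \<subseteq> commutant A"
  unfolding commutant_def by blast

lemma commutant_double: "(\<forall>T\<in>A. bounded_clinear_op T) \<Longrightarrow> A \<subseteq> commutant (commutant A)"
  unfolding commutant_def by auto

lemma commutant_triple:
  assumes "\<forall>T\<in>N. bounded_clinear_op T"
  shows "commutant (commutant (commutant N)) = commutant N"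
proof
  show "commutant (commutant (commutant N)) \<subseteq> commutant N"
    by (rule commutant_antimono[OF commutant_double[OF assms]])
  show "commutant N \<subseteq> commutant (commutant (commutant N))"
    by (rule commutant_double) (auto simp: commutant_def)
qed


section \<open>Seminorms and locally convex continuity\<close>

lemma seminorm_zero: "seminorm_c q \<Longrightarrow> q 0 = 0"
proof -
  assume q: "seminorm_c q"
  have "q ((0::complex) *\<^sub>C 0) = cmod 0 * q 0" using q unfolding seminorm_c_def by blast
  then show "q 0 = 0" by simp
qed

lemma seminorm_minus: "seminorm_c q \<Longrightarrow> q (- x) = q x"
proof -
  assume q: "seminorm_c q"
  have "q ((-1::complex) *\<^sub>C x) = cmod (-1) * q x" using q unfolding seminorm_c_def by blast
  then show "q (- x) = q x" by (simp only: scaleC_minus1) simp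
qed

lemma seminorm_commute: "seminorm_c q \<Longrightarrow> q (x - y) = q (y - x)"
proof -
  assume q: "seminorm_c q"
  have "q (- (y - x)) = q (y - x)" by (rule seminorm_minus[OF q])
  then show ?thesis by simp
qed

lemma seminorm_nonneg: "seminorm_c q \<Longrightarrow> q x \<ge> 0"
proof -
  assume q: "seminorm_c q"
  have "q (x + - x) \<le> q x + q (- x)" using q unfolding seminorm_c_def by blast
  then show ?thesis using seminorm_zero[OF q] seminorm_minus[OF q] by simp
qed

lemma lc_comp:
  assumes F: "lc_continuous S F" and G: "lc_continuous S G"
  shows "lc_continuous S (\<lambda>x. F (G x))"
  unfolding lc_continuous_def
proof (intro allI ballI impI)
  fix x p and \<epsilon> :: real assume p: "p \<in> S" and e: "\<epsilon> > 0"
  obtain q \<delta> where q: "q \<in> S" "\<delta> > 0" "\<And>y. q (y - G x) < \<delta> \<Longrightarrow> p (F y - F (G x)) < \<epsilon>"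
    using F p e unfolding lc_continuous_def by blast
  obtain r \<delta>' where r: "r \<in> S" "\<delta>' > 0" "\<And>y. r (y - x) < \<delta>' \<Longrightarrow> q (G y - G x) < \<delta>"
    using G q(1,2) unfolding lc_continuous_def by blast
  show "\<exists>q\<in>S. \<exists>\<delta>>0. \<forall>y. q (y - x) < \<delta> \<longrightarrow> p (F (G y) - F (G x)) < \<epsilon>"
    using q r by blast
qed

lemma lcf_comp:
  assumes F: "lc_continuous_fun S F" and G: "lc_continuous S G"
  shows "lc_continuous_fun S (\<lambda>x. F (G x))"
  unfolding lc_continuous_fun_def
proof (intro allI impI)
  fix x and \<epsilon> :: real assume e: "\<epsilon> > 0"
  obtain q \<delta> where q: "q \<in> S" "\<delta> > 0" "\<And>y. q (y - G x) < \<delta> \<Longrightarrow> dist (F y) (F (G x)) < \<epsilon>"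
    using F e unfolding lc_continuous_fun_def by blast
  obtain r \<delta>' where r: "r \<in> S" "\<delta>' > 0" "\<And>y. r (y - x) < \<delta>' \<Longrightarrow> q (G y - G x) < \<delta>"
    using G q(1,2) unfolding lc_continuous_def by blast
  show "\<exists>q\<in>S. \<exists>\<delta>>0. \<forall>y. q (y - x) < \<delta> \<longrightarrow> dist (F (G y)) (F (G x)) < \<epsilon>"
    using q r by blast
qed

lemma lcf_isCont:
  assumes f: "lc_continuous_fun S f" and \<phi>: "\<And>z. isCont \<phi> z"
  shows "lc_continuous_fun S (\<lambda>x. \<phi> (f x))"
  unfolding lc_continuous_fun_def
proof (intro allI impI)
  fix x and \<epsilon> :: real assume e: "\<epsilon> > 0"
  obtain d where d: "d > 0" "\<And>u. dist u (f x) < d \<Longrightarrow> dist (\<phi> u) (\<phi> (f x)) < \<epsilon>"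
    using \<phi>[of "f x"] e unfolding continuous_at_eps_delta by blast
  obtain q \<delta> where "q \<in> S" "\<delta> > 0" "\<And>y. q (y - x) < \<delta> \<Longrightarrow> dist (f y) (f x) < d"
    using f d(1) unfolding lc_continuous_fun_def by blast
  then show "\<exists>q\<in>S. \<exists>\<delta>>0. \<forall>y. q (y - x) < \<delta> \<longrightarrow> dist (\<phi> (f y)) (\<phi> (f x)) < \<epsilon>"
    using d(2) by blast
qed

lemma lcf_diff:
  fixes f g :: "'a::complex_vector \<Rightarrow> 'b::real_normed_vector"
  assumes dir: "\<forall>p\<in>S. \<forall>q\<in>S. \<exists>r\<in>S. \<forall>x. max (p x) (q x) \<le> r x"
    and f: "lc_continuous_fun S f" and g: "lc_continuous_fun S g"
  shows "lc_continuous_fun S (\<lambda>x. f x - g x)"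
  unfolding lc_continuous_fun_def
proof (intro allI impI)
  fix x and \<epsilon> :: real assume e: "\<epsilon> > 0"
  obtain q1 \<delta>1 where 1: "q1 \<in> S" "\<delta>1 > 0" "\<And>y. q1 (y - x) < \<delta>1 \<Longrightarrow> dist (f y) (f x) < \<epsilon>/2"
    using f e unfolding lc_continuous_fun_def by (meson half_gt_zero)
  obtain q2 \<delta>2 where 2: "q2 \<in> S" "\<delta>2 > 0" "\<And>y. q2 (y - x) < \<delta>2 \<Longrightarrow> dist (g y) (g x) < \<epsilon>/2"
    using g e unfolding lc_continuous_fun_def by (meson half_gt_zero)
  obtain r where r: "r \<in> S" "\<And>z. max (q1 z) (q2 z) \<le> r z" using dir 1(1) 2(1) by blast
  show "\<exists>q\<in>S. \<exists>\<delta>>0. \<forall>y. q (y - x) < \<delta> \<longrightarrow> dist (f y - g y) (f x - g x) < \<epsilon>"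
  proof (intro bexI[OF _ r(1)] exI[of _ "min \<delta>1 \<delta>2"] conjI allI impI)
    show "min \<delta>1 \<delta>2 > 0" using 1 2 by simp
    fix y assume y: "r (y - x) < min \<delta>1 \<delta>2"
    have a: "dist (f y) (f x) < \<epsilon>/2" using 1(3) r(2)[of "y - x"] y by force
    have b: "dist (g y) (g x) < \<epsilon>/2" using 2(3) r(2)[of "y - x"] y by force
    have "dist (f y - g y) (f x - g x) \<le> dist (f y) (f x) + dist (g y) (g x)"
    proof -
      have "(f y - g y) - (f x - g x) = (f y - f x) - (g y - g x)" by (simp add: algebra_simps)
      then show ?thesis unfolding dist_norm by (metis norm_triangle_ineq4)
    qed
    then show "dist (f y - g y) (f x - g x) < \<epsilon>" using a b by simp
  qed
qed

lemma lcf_dense_approx: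
  assumes dense: "\<forall>a. \<forall>p\<in>S. \<forall>\<epsilon>>0. \<exists>x\<in>A0. p (a - x) < \<epsilon>"
    and semi: "\<forall>p\<in>S. seminorm_c p"
    and f: "lc_continuous_fun S f" and e: "\<epsilon> > 0"
  shows "\<exists>x\<in>A0. dist (f x) (f w) < \<epsilon>"
proof -
  obtain q \<delta> where q: "q \<in> S" "\<delta> > 0" "\<And>y. q (y - w) < \<delta> \<Longrightarrow> dist (f y) (f w) < \<epsilon>"
    using f e unfolding lc_continuous_fun_def by blast
  obtain x where x: "x \<in> A0" "q (w - x) < \<delta>" using dense q by blast
  have "q (x - w) = q (w - x)" using seminorm_commute[of q] semi q(1) by blast
  then have "q (x - w) < \<delta>" using x by simp
  then show ?thesis using q(3) x(1) by blast
qed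

lemma lcf_dense_zero:
  fixes f :: "'a::complex_vector \<Rightarrow> 'b::real_normed_vector"
  assumes dense: "\<forall>a. \<forall>p\<in>S. \<forall>\<epsilon>>0. \<exists>x\<in>A0. p (a - x) < \<epsilon>"
    and semi: "\<forall>p\<in>S. seminorm_c p"
    and f: "lc_continuous_fun S f" and z: "\<And>x. x \<in> A0 \<Longrightarrow> f x = 0"
  shows "f w = 0"
proof (rule ccontr)
  assume "f w \<noteq> 0"
  then have "norm (f w) > 0" by simp
  then obtain x where "x \<in> A0" "dist (f x) (f w) < norm (f w)"
    using lcf_dense_approx[OF dense semi f] by blast
  then show False using z by (simp add: dist_norm)
qed

lemma lcf_dense_le0:
  fixes f :: "'a::complex_vector \<Rightarrow> real"
  assumes dense: "\<forall>a. \<forall>p\<in>S. \<forall>\<epsilon>>0. \<exists>x\<in>A0. p (a - x) < \<epsilon>"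
    and semi: "\<forall>p\<in>S. seminorm_c p"
    and f: "lc_continuous_fun S f" and z: "\<And>x. x \<in> A0 \<Longrightarrow> f x \<le> 0"
  shows "f w \<le> 0"
proof (rule ccontr)
  assume "\<not> f w \<le> 0"
  then have "f w > 0" by simp
  then obtain x where "x \<in> A0" "dist (f x) (f w) < f w"
    using lcf_dense_approx[OF dense semi f] by blast
  then show False using z[of x] by (simp add: dist_real_def)
qed




lemma clin_lin: "clinear_on UNIV f \<Longrightarrow> f (c *\<^sub>C x + d *\<^sub>C y) = c *\<^sub>C f x + d *\<^sub>C f y"
  unfolding clinear_on_def by blast
lemma clin_add: "clinear_on UNIV (f::'a::complex_vector \<Rightarrow> 'b::complex_vector) \<Longrightarrow> f (x + y) = f x + f y"
  using clin_lin[of f 1 x 1 y] by (simp add: scaleC_one)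
lemma clin_scale: "clinear_on UNIV (f::'a::complex_vector \<Rightarrow> 'b::complex_vector) \<Longrightarrow> f (c *\<^sub>C x) = c *\<^sub>C f x"
  using clin_lin[of f c x 0 x] by simp
lemma clin_zero: "clinear_on UNIV (f::'a::complex_vector \<Rightarrow> 'b::complex_vector) \<Longrightarrow> f 0 = 0"
  using clin_scale[of f 0 0] by simp
lemma clin_minus: "clinear_on UNIV (f::'a::complex_vector \<Rightarrow> 'b::complex_vector) \<Longrightarrow> f (- x) = - f x"
  using clin_scale[of f "-1" x] by (simp only: scaleC_minus1)
lemma clin_diff: "clinear_on UNIV (f::'a::complex_vector \<Rightarrow> 'b::complex_vector) \<Longrightarrow> f (x - y) = f x - f y"
  by (simp only: diff_conv_add_uminus clin_add clin_minus)

locale setting =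
  fixes A0 :: "'a::complex_vector set" and mul :: "'a \<Rightarrow> 'a \<Rightarrow> 'a" and star :: "'a \<Rightarrow> 'a"
    and S :: "('a \<Rightarrow> real) set" and e :: 'a and \<omega>0 \<omega> :: "'a \<Rightarrow> complex" and p :: "'a \<Rightarrow> real"
    and lam :: "'a \<Rightarrow> 'h::chilbert_space"
  assumes lc: "lcqsa A0 mul star S e"
    and pos_bound: "\<forall>a\<in>A0. Re (\<omega>0 (mul (star a) a)) \<le> (p a)\<^sup>2"
    and semip: "seminorm_c p" and contp: "lc_continuous_fun S p"
    and ext: "\<forall>x\<in>A0. \<omega> x = \<omega>0 x" and contw: "lc_continuous_fun S \<omega>"
    and gns: "gns A0 mul star \<omega> lam"
    and bnd: "\<forall>x\<in>A0. \<exists>K. \<forall>a\<in>A0. norm (lam (mul x a)) \<le> K * norm (lam a)"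
begin

lemma S_semi: "\<forall>q\<in>S. seminorm_c q" using lc[unfolded lcqsa_def, THEN conjunct2, THEN conjunct1] .
lemma S_dir: "\<forall>p\<in>S. \<forall>q\<in>S. \<exists>r\<in>S. \<forall>x. max (p x) (q x) \<le> r x" using lc[unfolded lcqsa_def, THEN conjunct2, THEN conjunct2, THEN conjunct1] .
lemma dense: "\<forall>a. \<forall>p\<in>S. \<forall>\<epsilon>>0. \<exists>x\<in>A0. p (a - x) < \<epsilon>" using lc[unfolded lcqsa_def, THEN conjunct2, THEN conjunct2, THEN conjunct2, THEN conjunct2, THEN conjunct2, THEN conjunct2, THEN conjunct2, THEN conjunct2, THEN conjunct2, THEN conjunct2, THEN conjunct2, THEN conjunct2, THEN conjunct2, THEN conjunct2, THEN conjunct2, THEN conjunct1] .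
lemma A0_zero: "0 \<in> A0" using lc[unfolded lcqsa_def, THEN conjunct2, THEN conjunct2, THEN conjunct2, THEN conjunct2, THEN conjunct1] .
lemma A0_clos: "\<forall>x\<in>A0. \<forall>y\<in>A0. \<forall>c. x + y \<in> A0 \<and> c *\<^sub>C x \<in> A0 \<and> mul x y \<in> A0 \<and> star x \<in> A0" using lc[unfolded lcqsa_def, THEN conjunct2, THEN conjunct2, THEN conjunct2, THEN conjunct2, THEN conjunct2, THEN conjunct1] .
lemma A0_add: "x \<in> A0 \<Longrightarrow> y \<in> A0 \<Longrightarrow> x + y \<in> A0" using A0_clos by blast
lemma A0_scale: "x \<in> A0 \<Longrightarrow> c *\<^sub>C x \<in> A0" using A0_clos by blast
lemma A0_mul: "x \<in> A0 \<Longrightarrow> y \<in> A0 \<Longrightarrow> mul x y \<in> A0" using A0_clos by blast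
lemma A0_star: "x \<in> A0 \<Longrightarrow> star x \<in> A0" using A0_clos by blast
lemma assoc_all: "\<forall>x\<in>A0. \<forall>y\<in>A0. \<forall>z\<in>A0. mul (mul x y) z = mul x (mul y z)" using lc[unfolded lcqsa_def, THEN conjunct2, THEN conjunct2, THEN conjunct2, THEN conjunct2, THEN conjunct2, THEN conjunct2, THEN conjunct1] .
lemma assoc: "x \<in> A0 \<Longrightarrow> y \<in> A0 \<Longrightarrow> z \<in> A0 \<Longrightarrow> mul (mul x y) z = mul x (mul y z)"
  using assoc_all by blast
lemma star_mul_all: "\<forall>x\<in>A0. \<forall>y\<in>A0. star (mul x y) = mul (star y) (star x)" using lc[unfolded lcqsa_def, THEN conjunct2, THEN conjunct2, THEN conjunct2, THEN conjunct2, THEN conjunct2, THEN conjunct2, THEN conjunct2, THEN conjunct1] .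
lemma star_mul: "x \<in> A0 \<Longrightarrow> y \<in> A0 \<Longrightarrow> star (mul x y) = mul (star y) (star x)"
  using star_mul_all by blast
lemma star_star_all: "\<forall>a. star (star a) = a" using lc[unfolded lcqsa_def, THEN conjunct2, THEN conjunct2, THEN conjunct2, THEN conjunct2, THEN conjunct2, THEN conjunct2, THEN conjunct2, THEN conjunct2, THEN conjunct2, THEN conjunct2, THEN conjunct2, THEN conjunct1] .
lemma star_star: "star (star x) = x" using star_star_all by blast
lemma star_cont: "lc_continuous S star" using lc[unfolded lcqsa_def, THEN conjunct2, THEN conjunct2, THEN conjunct2, THEN conjunct2, THEN conjunct2, THEN conjunct2, THEN conjunct2, THEN conjunct2, THEN conjunct2, THEN conjunct2, THEN conjunct2, THEN conjunct2, THEN conjunct1] .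
lemma mul_all: "\<forall>x\<in>A0. clinear_on UNIV (\<lambda>a. mul a x) \<and> clinear_on UNIV (\<lambda>a. mul x a) \<and>
              lc_continuous S (\<lambda>a. mul a x) \<and> lc_continuous S (\<lambda>a. mul x a)" using lc[unfolded lcqsa_def, THEN conjunct2, THEN conjunct2, THEN conjunct2, THEN conjunct2, THEN conjunct2, THEN conjunct2, THEN conjunct2, THEN conjunct2, THEN conjunct2, THEN conjunct2, THEN conjunct2, THEN conjunct2, THEN conjunct2, THEN conjunct1] .
lemma mulR_lin: "x \<in> A0 \<Longrightarrow> clinear_on UNIV (\<lambda>a. mul a x)" using mul_all by blast
lemma mulL_lin: "x \<in> A0 \<Longrightarrow> clinear_on UNIV (\<lambda>a. mul x a)" using mul_all by blast
lemma mulR_cont: "x \<in> A0 \<Longrightarrow> lc_continuous S (\<lambda>a. mul a x)" using mul_all by blast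
lemma lam_lin: "clinear_on UNIV lam" using gns unfolding gns_def by (elim conjE)
lemma lam_dense: "closure (lam ` A0) = UNIV" using gns unfolding gns_def by (elim conjE)
lemma lam_inner_all: "\<forall>x\<in>A0. \<forall>a. cinner (lam x) (lam a) = \<omega> (mul (star a) x)" using gns unfolding gns_def by (elim conjE)
lemma lam_inner: "x \<in> A0 \<Longrightarrow> cinner (lam x) (lam a) = \<omega> (mul (star a) x)" using lam_inner_all by blast

lemma A0_lin: "x \<in> A0 \<Longrightarrow> y \<in> A0 \<Longrightarrow> c *\<^sub>C x + d *\<^sub>C y \<in> A0"
  by (intro A0_add A0_scale)
lemma A0_diff: "x \<in> A0 \<Longrightarrow> y \<in> A0 \<Longrightarrow> x - y \<in> A0"
  using A0_lin[of x y 1 "-1"] by (simp only: scaleC_one scaleC_minus1 diff_conv_add_uminus)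

lemma lam_diff: "lam (x - y) = lam x - lam y" by (rule clin_diff[OF lam_lin])

lemma p_nonneg: "p x \<ge> 0" by (rule seminorm_nonneg[OF semip])

lemma lam_bound0: "y \<in> A0 \<Longrightarrow> norm (lam y) \<le> p y"
proof -
  assume y: "y \<in> A0"
  have "(norm (lam y))^2 = Re (cinner (lam y) (lam y))" by (rule norm_sq_Re)
  also have "\<dots> = Re (\<omega>0 (mul (star y) y))" by (simp only: lam_inner[OF y] bspec[OF ext A0_mul[OF A0_star[OF y] y]])
  also have "\<dots> \<le> (p y)^2" using pos_bound y by blast
  finally show ?thesis by (rule power2_le_imp_le[OF _ p_nonneg])
qed

lemma p_small: "\<epsilon> > 0 \<Longrightarrow> \<exists>q\<in>S. \<exists>\<delta>>0. \<forall>z. q z < \<delta> \<longrightarrow> p z < \<epsilon>"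
proof -
  assume e: "\<epsilon> > 0"
  obtain q \<delta> where q: "q \<in> S" "\<delta> > 0" "\<And>y. q (y - 0) < \<delta> \<Longrightarrow> dist (p y) (p 0) < \<epsilon>"
    using contp e unfolding lc_continuous_fun_def by blast
  have "p z < \<epsilon>" if "q z < \<delta>" for z
    using q(3)[of z] that seminorm_zero[OF semip] p_nonneg[of z] by (simp add: dist_real_def)
  then show ?thesis using q by blast
qed

lemma lam_bound: "norm (lam w) \<le> p w"
proof -
  have step1: "cmod (\<omega> (mul (star w) x)) \<le> norm (lam x) * p w" if x: "x \<in> A0" for x
  proof -
    define g where "g u = cmod (\<omega> (mul (star u) x)) - norm (lam x) * p u" for u
    have c1: "lc_continuous_fun S (\<lambda>u. \<omega> (mul (star u) x))"
      by (rule lcf_comp[OF contw lc_comp[OF mulR_cont[OF x] star_cont]])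
    have c2: "lc_continuous_fun S (\<lambda>u. cmod (\<omega> (mul (star u) x)))"
      by (rule lcf_isCont[OF c1]) (intro continuous_intros)
    have c3: "lc_continuous_fun S (\<lambda>u. norm (lam x) * p u)"
      by (rule lcf_isCont[OF contp]) (intro continuous_intros)
    have cg: "lc_continuous_fun S g" unfolding g_def by (rule lcf_diff[OF S_dir c2 c3])
    have "g u \<le> 0" if u: "u \<in> A0" for u
    proof -
      have "cmod (\<omega> (mul (star u) x)) = cmod (cinner (lam x) (lam u))" using lam_inner[OF x] by simp
      also have "\<dots> \<le> norm (lam x) * norm (lam u)" by (rule cauchy_schwarz)
      also have "\<dots> \<le> norm (lam x) * p u" using lam_bound0[OF u] by (simp add: mult_left_mono)
      finally show ?thesis unfolding g_def by simp
    qed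
    then have "g w \<le> 0" by (rule lcf_dense_le0[OF dense S_semi cg])
    then show ?thesis unfolding g_def by simp
  qed
  have step2: "cmod (cinner \<xi> (lam w)) \<le> p w * norm \<xi>" for \<xi>
  proof (rule dense_le[OF lam_dense, where f="\<lambda>\<xi>. cmod (cinner \<xi> (lam w))" and g="\<lambda>\<xi>. p w * norm \<xi>"])
    show "continuous_on UNIV (\<lambda>\<xi>. cmod (cinner \<xi> (lam w)))"
      by (intro continuous_on_norm cont_cinner_left continuous_on_id)
    show "continuous_on UNIV (\<lambda>\<xi>. p w * norm \<xi>)" by (intro continuous_intros)
    fix \<xi> assume "\<xi> \<in> lam ` A0"
    then obtain x where x: "x \<in> A0" "\<xi> = lam x" by blast
    show "cmod (cinner \<xi> (lam w)) \<le> p w * norm \<xi>"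
      using step1[OF x(1)] x lam_inner[OF x(1), of w] by (simp add: mult.commute)
  qed
  have "cmod (cinner (lam w) (lam w)) = (norm (lam w))^2"
    by (simp only: cinner_self_norm norm_of_real) simp
  then have "(norm (lam w))^2 \<le> p w * norm (lam w)"
    using step2[of "lam w"] by simp
  then show ?thesis using p_nonneg[of w] by (cases "norm (lam w) = 0") (auto simp: power2_eq_square)
qed

lemma lam_cont: "lc_continuous S F \<Longrightarrow> lc_continuous_fun S (\<lambda>x. lam (F x))"
  unfolding lc_continuous_fun_def
proof (intro allI impI)
  fix x and \<epsilon> :: real assume F: "lc_continuous S F" and e: "\<epsilon> > 0"
  obtain q \<delta> where q: "q \<in> S" "\<delta> > 0" "\<And>z. q z < \<delta> \<Longrightarrow> p z < \<epsilon>" using p_small[OF e] by blast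
  obtain r \<delta>' where r: "r \<in> S" "\<delta>' > 0" "\<And>y. r (y - x) < \<delta>' \<Longrightarrow> q (F y - F x) < \<delta>"
    using F q(1,2) unfolding lc_continuous_def by blast
  have "dist (lam (F y)) (lam (F x)) < \<epsilon>" if "r (y - x) < \<delta>'" for y
  proof -
    have "dist (lam (F y)) (lam (F x)) = norm (lam (F y - F x))" by (simp add: dist_norm lam_diff)
    also have "\<dots> \<le> p (F y - F x)" by (rule lam_bound)
    also have "\<dots> < \<epsilon>" using q(3) r(3) that by blast
    finally show ?thesis .
  qed
  then show "\<exists>q\<in>S. \<exists>\<delta>>0. \<forall>y. q (y - x) < \<delta> \<longrightarrow> dist (lam (F y)) (lam (F x)) < \<epsilon>"
    using r(1,2) by blast
qed


lemma mulL_diff: "x \<in> A0 \<Longrightarrow> mul x (u - v) = mul x u - mul x v"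
  by (rule clin_diff[OF mulL_lin])
lemma mulL_lin2: "x \<in> A0 \<Longrightarrow> mul x (c *\<^sub>C u + d *\<^sub>C v) = c *\<^sub>C mul x u + d *\<^sub>C mul x v"
  by (rule clin_lin[OF mulL_lin])
lemma lam_lin2: "lam (c *\<^sub>C u + d *\<^sub>C v) = c *\<^sub>C lam u + d *\<^sub>C lam v"
  by (rule clin_lin[OF lam_lin])

lemma Tx_exists:
  assumes x: "x \<in> A0"
  shows "\<exists>T. bounded_clinear_op T \<and> (\<forall>a\<in>A0. T (lam a) = lam (mul x a))"
proof -
  obtain K0 where K0: "\<And>a. a \<in> A0 \<Longrightarrow> norm (lam (mul x a)) \<le> K0 * norm (lam a)" using bnd x by blast
  define K where "K = \<bar>K0\<bar>"
  have K: "K \<ge> 0" "\<And>a. a \<in> A0 \<Longrightarrow> norm (lam (mul x a)) \<le> K * norm (lam a)"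
  proof -
    show "K \<ge> 0" unfolding K_def by simp
    fix a assume a: "a \<in> A0"
    have "K0 * norm (lam a) \<le> K * norm (lam a)" unfolding K_def by (simp add: mult_right_mono)
    then show "norm (lam (mul x a)) \<le> K * norm (lam a)" using K0[OF a] by linarith
  qed
  have lip: "norm (lam (mul x a) - lam (mul x b)) \<le> K * norm (lam a - lam b)" if "a \<in> A0" "b \<in> A0" for a b
  proof -
    have "lam (mul x a) - lam (mul x b) = lam (mul x (a - b))" by (simp only: mulL_diff[OF x] lam_diff)
    moreover have "lam a - lam b = lam (a - b)" by (simp only: lam_diff)
    ultimately show ?thesis using K(2)[OF A0_diff[OF that]] by simp
  qed
  define X where "X = lam ` A0"
  define f where "f \<eta> = lam (mul x (SOME a. a \<in> A0 \<and> lam a = \<eta>))" for \<eta>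
  have fX: "f (lam a) = lam (mul x a)" if a: "a \<in> A0" for a
  proof -
    define a' where "a' = (SOME b. b \<in> A0 \<and> lam b = lam a)"
    have a': "a' \<in> A0 \<and> lam a' = lam a" unfolding a'_def by (rule someI[of _ a]) (simp add: a)
    have "norm (lam (mul x a') - lam (mul x a)) \<le> K * norm (lam a' - lam a)" using lip a' a by blast
    then have "lam (mul x a') = lam (mul x a)" using a' by simp
    then show ?thesis unfolding f_def a'_def[symmetric] .
  qed
  have uc: "uniformly_continuous_on X f"
    unfolding uniformly_continuous_on_def
  proof (intro allI impI)
    fix \<epsilon> :: real assume e: "\<epsilon> > 0"
    show "\<exists>d>0. \<forall>\<eta>\<in>X. \<forall>\<eta>'\<in>X. dist \<eta>' \<eta> < d \<longrightarrow> dist (f \<eta>') (f \<eta>) < \<epsilon>"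
    proof (intro exI[of _ "\<epsilon> / (K + 1)"] conjI ballI impI)
      show "\<epsilon> / (K + 1) > 0" using e K by simp
      fix \<eta> \<eta>' assume "\<eta> \<in> X" "\<eta>' \<in> X" and d: "dist \<eta>' \<eta> < \<epsilon> / (K + 1)"
      then obtain a b where ab: "a \<in> A0" "b \<in> A0" "\<eta> = lam a" "\<eta>' = lam b" unfolding X_def by blast
      have "dist (f \<eta>') (f \<eta>) \<le> K * dist \<eta>' \<eta>"
        unfolding ab fX[OF ab(1)] fX[OF ab(2)] dist_norm using lip[OF ab(2,1)] .
      also have "\<dots> \<le> K * (\<epsilon> / (K + 1))" by (rule mult_left_mono[OF less_imp_le[OF d] K(1)])
      also have "\<dots> < \<epsilon>" using e K by (simp add: field_simps)
      finally show "dist (f \<eta>') (f \<eta>) < \<epsilon>" .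
    qed
  qed
  obtain g where g: "uniformly_continuous_on (closure X) g" "\<And>\<eta>. \<eta> \<in> X \<Longrightarrow> f \<eta> = g \<eta>"
    using uniformly_continuous_on_extension_on_closure[OF uc] by metis
  have gc: "continuous_on UNIV g" using uniformly_continuous_imp_continuous[OF g(1)] lam_dense
    unfolding X_def by simp
  have gl: "g (lam a) = lam (mul x a)" if "a \<in> A0" for a
    using g(2)[of "lam a"] fX[OF that] that unfolding X_def by simp
  have lin1: "g (c *\<^sub>C \<xi> + d *\<^sub>C lam b) = c *\<^sub>C g \<xi> + d *\<^sub>C g (lam b)" if b: "b \<in> A0" for c d \<xi> b
  proof (rule dense_eq[OF lam_dense, where f="\<lambda>\<xi>. g (c *\<^sub>C \<xi> + d *\<^sub>C lam b)" and g="\<lambda>\<xi>. c *\<^sub>C g \<xi> + d *\<^sub>C g (lam b)"])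
    show "continuous_on UNIV (\<lambda>\<xi>. g (c *\<^sub>C \<xi> + d *\<^sub>C lam b))"
      by (rule continuous_on_compose2[OF gc]) (auto intro!: continuous_intros cont_scaleC)
    show "continuous_on UNIV (\<lambda>\<xi>. c *\<^sub>C g \<xi> + d *\<^sub>C g (lam b))"
      by (auto intro!: continuous_intros cont_scaleC gc)
    fix \<xi> assume "\<xi> \<in> lam ` A0"
    then obtain a where a: "a \<in> A0" "\<xi> = lam a" by blast
    have "g (c *\<^sub>C \<xi> + d *\<^sub>C lam b) = g (lam (c *\<^sub>C a + d *\<^sub>C b))" unfolding a(2) lam_lin2 ..
    also have "\<dots> = lam (mul x (c *\<^sub>C a + d *\<^sub>C b))" by (rule gl[OF A0_lin[OF a(1) b]])
    also have "\<dots> = c *\<^sub>C g \<xi> + d *\<^sub>C g (lam b)"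
      unfolding mulL_lin2[OF x] lam_lin2 a(2) gl[OF a(1)] gl[OF b] ..
    finally show "g (c *\<^sub>C \<xi> + d *\<^sub>C lam b) = c *\<^sub>C g \<xi> + d *\<^sub>C g (lam b)" .
  qed
  have lin: "g (c *\<^sub>C \<xi> + d *\<^sub>C \<eta>) = c *\<^sub>C g \<xi> + d *\<^sub>C g \<eta>" for c d \<xi> \<eta>
  proof (rule dense_eq[OF lam_dense, where f="\<lambda>\<eta>. g (c *\<^sub>C \<xi> + d *\<^sub>C \<eta>)" and g="\<lambda>\<eta>. c *\<^sub>C g \<xi> + d *\<^sub>C g \<eta>"])
    show "continuous_on UNIV (\<lambda>\<eta>. g (c *\<^sub>C \<xi> + d *\<^sub>C \<eta>))"
      by (rule continuous_on_compose2[OF gc]) (auto intro!: continuous_intros cont_scaleC)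
    show "continuous_on UNIV (\<lambda>\<eta>. c *\<^sub>C g \<xi> + d *\<^sub>C g \<eta>)"
      by (auto intro!: continuous_intros cont_scaleC gc)
    fix \<eta> assume "\<eta> \<in> lam ` A0"
    then obtain b where b: "b \<in> A0" "\<eta> = lam b" by blast
    show "g (c *\<^sub>C \<xi> + d *\<^sub>C \<eta>) = c *\<^sub>C g \<xi> + d *\<^sub>C g \<eta>" unfolding b(2) by (rule lin1[OF b(1)])
  qed
  have bd: "norm (g \<xi>) \<le> K * norm \<xi>" for \<xi>
  proof (rule dense_le[OF lam_dense, where f="\<lambda>\<xi>. norm (g \<xi>)" and g="\<lambda>\<xi>. K * norm \<xi>"])
    show "continuous_on UNIV (\<lambda>\<xi>. norm (g \<xi>))" by (intro continuous_on_norm gc)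
    show "continuous_on UNIV (\<lambda>\<xi>. K * norm \<xi>)" by (intro continuous_intros)
    fix \<xi> assume "\<xi> \<in> lam ` A0"
    then obtain a where a: "a \<in> A0" "\<xi> = lam a" by blast
    show "norm (g \<xi>) \<le> K * norm \<xi>" unfolding a(2) gl[OF a(1)] by (rule K(2)[OF a(1)])
  qed
  have "bounded_clinear_op g" unfolding bounded_clinear_op_def clinear_on_def using lin bd by blast
  then show ?thesis using gl by blast
qed

definition Tx :: "'a \<Rightarrow> 'h \<Rightarrow> 'h" where
  "Tx x = (SOME T. bounded_clinear_op T \<and> (\<forall>a\<in>A0. T (lam a) = lam (mul x a)))"

lemma Tx_spec: "x \<in> A0 \<Longrightarrow> bounded_clinear_op (Tx x) \<and> (\<forall>a\<in>A0. Tx x (lam a) = lam (mul x a))"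
  unfolding Tx_def by (rule someI_ex[OF Tx_exists])

lemma Tx_bclin: "x \<in> A0 \<Longrightarrow> bounded_clinear_op (Tx x)" using Tx_spec by blast
lemma Tx_lam: "x \<in> A0 \<Longrightarrow> a \<in> A0 \<Longrightarrow> Tx x (lam a) = lam (mul x a)" using Tx_spec by blast

lemma Tx_adj:
  assumes x: "x \<in> A0"
  shows "cinner (Tx x \<xi>) \<eta> = cinner \<xi> (Tx (star x) \<eta>)"
proof -
  have sx: "star x \<in> A0" by (rule A0_star[OF x])
  have base: "cinner (Tx x (lam a)) (lam c) = cinner (lam a) (Tx (star x) (lam c))"
    if a: "a \<in> A0" and c: "c \<in> A0" for a c
  proof -
    have "cinner (Tx x (lam a)) (lam c) = \<omega> (mul (star c) (mul x a))"
      unfolding Tx_lam[OF x a] by (rule lam_inner[OF A0_mul[OF x a]])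
    also have "\<dots> = \<omega> (mul (mul (star c) x) a)" by (simp only: assoc[OF A0_star[OF c] x a])
    also have "\<dots> = \<omega> (mul (star (mul (star x) c)) a)" by (simp only: star_mul[OF sx c] star_star)
    also have "\<dots> = cinner (lam a) (lam (mul (star x) c))"
      by (rule lam_inner[OF a, symmetric])
    also have "\<dots> = cinner (lam a) (Tx (star x) (lam c))" by (simp only: Tx_lam[OF sx c])
    finally show ?thesis .
  qed
  have step: "cinner (Tx x \<xi>) (lam c) = cinner \<xi> (Tx (star x) (lam c))" if c: "c \<in> A0" for c \<xi>
  proof (rule dense_eq[OF lam_dense, where f="\<lambda>\<xi>. cinner (Tx x \<xi>) (lam c)" and g="\<lambda>\<xi>. cinner \<xi> (Tx (star x) (lam c))"])
    show "continuous_on UNIV (\<lambda>\<xi>. cinner (Tx x \<xi>) (lam c))"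
      by (intro cont_cinner_left cont_bclin[OF Tx_bclin[OF x]] continuous_on_id)
    show "continuous_on UNIV (\<lambda>\<xi>. cinner \<xi> (Tx (star x) (lam c)))"
      by (intro cont_cinner_left continuous_on_id)
    fix \<xi> assume "\<xi> \<in> lam ` A0"
    then obtain a where a: "a \<in> A0" "\<xi> = lam a" by blast
    show "cinner (Tx x \<xi>) (lam c) = cinner \<xi> (Tx (star x) (lam c))" unfolding a(2) by (rule base[OF a(1) c])
  qed
  show ?thesis
  proof (rule dense_eq[OF lam_dense, where f="\<lambda>\<eta>. cinner (Tx x \<xi>) \<eta>" and g="\<lambda>\<eta>. cinner \<xi> (Tx (star x) \<eta>)"])
    show "continuous_on UNIV (\<lambda>\<eta>. cinner (Tx x \<xi>) \<eta>)"
      by (intro cont_cinner_right continuous_on_id)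
    show "continuous_on UNIV (\<lambda>\<eta>. cinner \<xi> (Tx (star x) \<eta>))"
      by (intro cont_cinner_right cont_bclin[OF Tx_bclin[OF sx]] continuous_on_id)
    fix \<eta> assume "\<eta> \<in> lam ` A0"
    then obtain c where c: "c \<in> A0" "\<eta> = lam c" by blast
    show "cinner (Tx x \<xi>) \<eta> = cinner \<xi> (Tx (star x) \<eta>)" unfolding c(2) by (rule step[OF c(1)])
  qed
qed


lemma Tx_adj_eq: "x \<in> A0 \<Longrightarrow> adj (Tx x) = Tx (star x)"
  by (rule adj_unique[OF Tx_bclin Tx_adj])

lemma N_bclin: "\<forall>T\<in>Tx ` A0. bounded_clinear_op T" using Tx_bclin by blast

lemma wc_sub: "weak_commutant_pi A0 mul star lam \<subseteq> commutant (Tx ` A0)"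
proof
  fix C assume "C \<in> weak_commutant_pi A0 mul star lam"
  then have C: "bounded_clinear_op C"
    and h: "\<And>x a c. a \<in> A0 \<Longrightarrow> c \<in> A0 \<Longrightarrow>
       cinner (lam (mul x a)) (adj C (lam c)) = cinner (C (lam a)) (lam (mul (star x) c))"
    unfolding weak_commutant_pi_def by blast+
  have "C \<circ> Tx x = Tx x \<circ> C" if x: "x \<in> A0" for x
  proof (rule op_eq_dense[OF lam_dense bclin_comp[OF C Tx_bclin[OF x]] bclin_comp[OF Tx_bclin[OF x] C]])
    fix \<xi> \<eta> assume "\<xi> \<in> lam ` A0" "\<eta> \<in> lam ` A0"
    then obtain a c where a: "a \<in> A0" "\<xi> = lam a" and c: "c \<in> A0" "\<eta> = lam c" by blast
    have sx: "star x \<in> A0" by (rule A0_star[OF x])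
    have "cinner ((C \<circ> Tx x) (lam a)) (lam c) = cinner (lam (mul x a)) (adj C (lam c))"
      by (simp add: adj_spec(2)[OF C] Tx_lam[OF x a(1)])
    also have "\<dots> = cinner (C (lam a)) (lam (mul (star x) c))" by (rule h[OF a(1) c(1)])
    also have "\<dots> = cinner (C (lam a)) (Tx (star x) (lam c))" by (simp only: Tx_lam[OF sx c(1)])
    also have "\<dots> = cinner ((Tx x \<circ> C) (lam a)) (lam c)" by (simp add: Tx_adj[OF x])
    finally show "cinner ((C \<circ> Tx x) \<xi>) \<eta> = cinner ((Tx x \<circ> C) \<xi>) \<eta>" unfolding a(2) c(2) .
  qed
  then show "C \<in> commutant (Tx ` A0)" unfolding commutant_def using C by auto
qed

lemma comm_sub: "commutant (Tx ` A0) \<subseteq> weak_commutant_pi A0 mul star lam"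
proof
  fix C assume "C \<in> commutant (Tx ` A0)"
  then have C: "bounded_clinear_op C" and cm: "\<And>x. x \<in> A0 \<Longrightarrow> C \<circ> Tx x = Tx x \<circ> C"
    unfolding commutant_def by auto
  have "cinner (lam (mul x a)) (adj C (lam c)) = cinner (C (lam a)) (lam (mul (star x) c))"
    if a: "a \<in> A0" and c: "c \<in> A0" for x a c
  proof -
    define h where "h x = cinner (lam (mul x a)) (adj C (lam c)) - cinner (C (lam a)) (lam (mul (star x) c))" for x
    have c1: "lc_continuous_fun S (\<lambda>x. cinner (lam (mul x a)) (adj C (lam c)))"
      by (rule lcf_isCont[OF lam_cont[OF mulR_cont[OF a]]])
         (intro continuous_on_interior[OF cont_cinner_left[OF continuous_on_id]]; simp)
    have c2: "lc_continuous_fun S (\<lambda>x. cinner (C (lam a)) (lam (mul (star x) c)))"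
      by (rule lcf_isCont[OF lam_cont[OF lc_comp[OF mulR_cont[OF c] star_cont]]])
         (intro continuous_on_interior[OF cont_cinner_right[OF continuous_on_id]]; simp)
    have ch: "lc_continuous_fun S h" unfolding h_def by (rule lcf_diff[OF S_dir c1 c2])
    have "h y = 0" if y: "y \<in> A0" for y
    proof -
      have sy: "star y \<in> A0" by (rule A0_star[OF y])
      have "cinner (lam (mul y a)) (adj C (lam c)) = cinner (C (Tx y (lam a))) (lam c)"
        by (simp add: adj_spec(2)[OF C] Tx_lam[OF y a])
      also have "\<dots> = cinner (Tx y (C (lam a))) (lam c)" using cm[OF y] by (metis comp_apply)
      also have "\<dots> = cinner (C (lam a)) (Tx (star y) (lam c))" by (rule Tx_adj[OF y])
      also have "\<dots> = cinner (C (lam a)) (lam (mul (star y) c))" by (simp only: Tx_lam[OF sy c])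
      finally show ?thesis unfolding h_def by simp
    qed
    then have "h x = 0" by (rule lcf_dense_zero[OF dense S_semi ch])
    then show ?thesis unfolding h_def by simp
  qed
  then show "C \<in> weak_commutant_pi A0 mul star lam" unfolding weak_commutant_pi_def using C by blast
qed

lemma wc_eq: "weak_commutant_pi A0 mul star lam = commutant (Tx ` A0)"
  using wc_sub comm_sub by blast

lemma vN: "von_neumann_algebra (commutant (Tx ` A0))"
  unfolding von_neumann_algebra_def
proof (intro conjI ballI allI)
  let ?M = "commutant (Tx ` A0)"
  show "bounded_clinear_op X" if "X \<in> ?M" for X using that unfolding commutant_def by blast
  show "id \<in> ?M" unfolding commutant_def using bclin_id by auto
  fix X Y assume X: "X \<in> ?M" and Y: "Y \<in> ?M"
  have Xb: "bounded_clinear_op X" and Xc: "\<And>x. x \<in> A0 \<Longrightarrow> X \<circ> Tx x = Tx x \<circ> X"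
    using X unfolding commutant_def by auto
  have Yb: "bounded_clinear_op Y" and Yc: "\<And>x. x \<in> A0 \<Longrightarrow> Y \<circ> Tx x = Tx x \<circ> Y"
    using Y unfolding commutant_def by auto
  show "(\<lambda>\<xi>. X \<xi> + Y \<xi>) \<in> ?M"
    unfolding commutant_def
  proof (intro CollectI conjI ballI bclin_plus[OF Xb Yb])
    fix T assume "T \<in> Tx ` A0"
    then obtain x where x: "x \<in> A0" "T = Tx x" by blast
    show "(\<lambda>\<xi>. X \<xi> + Y \<xi>) \<circ> T = T \<circ> (\<lambda>\<xi>. X \<xi> + Y \<xi>)"
    proof
      fix \<xi>
      have "X (T \<xi>) = T (X \<xi>)" "Y (T \<xi>) = T (Y \<xi>)" using Xc[OF x(1)] Yc[OF x(1)] x(2) by (metis comp_apply)+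
      then show "((\<lambda>\<xi>. X \<xi> + Y \<xi>) \<circ> T) \<xi> = (T \<circ> (\<lambda>\<xi>. X \<xi> + Y \<xi>)) \<xi>"
        using bclin_add[OF Tx_bclin[OF x(1)]] x(2) by simp
    qed
  qed
  show "X \<circ> Y \<in> ?M"
    unfolding commutant_def
  proof (intro CollectI conjI ballI bclin_comp[OF Xb Yb])
    fix T assume "T \<in> Tx ` A0"
    then obtain x where x: "x \<in> A0" "T = Tx x" by blast
    have "X \<circ> Y \<circ> Tx x = X \<circ> (Y \<circ> Tx x)" by (rule comp_assoc)
    also have "\<dots> = X \<circ> (Tx x \<circ> Y)" using Yc[OF x(1)] by simp
    also have "\<dots> = (X \<circ> Tx x) \<circ> Y" by (rule comp_assoc[symmetric])
    also have "\<dots> = (Tx x \<circ> X) \<circ> Y" using Xc[OF x(1)] by simp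
    also have "\<dots> = Tx x \<circ> (X \<circ> Y)" by (rule comp_assoc)
    finally show "X \<circ> Y \<circ> T = T \<circ> (X \<circ> Y)" using x(2) by simp
  qed
  show "adj X \<in> ?M"
    unfolding commutant_def
  proof (intro CollectI conjI ballI adj_spec(1)[OF Xb])
    fix T assume "T \<in> Tx ` A0"
    then obtain x where x: "x \<in> A0" "T = Tx x" by blast
    have sx: "star x \<in> A0" by (rule A0_star[OF x(1)])
    show "adj X \<circ> T = T \<circ> adj X"
    proof
      fix \<eta>
      show "(adj X \<circ> T) \<eta> = (T \<circ> adj X) \<eta>"
      proof (rule cinner_ext2)
        fix \<xi>
        have "cinner \<xi> (adj X (Tx x \<eta>)) = cinner (X \<xi>) (Tx x \<eta>)" by (simp add: adj_spec(2)[OF Xb])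
        also have "\<dots> = cinner (Tx (star x) (X \<xi>)) \<eta>" using Tx_adj[OF sx, of "X \<xi>" \<eta>] by (simp add: star_star)
        also have "Tx (star x) (X \<xi>) = X (Tx (star x) \<xi>)" using Xc[OF sx] by (metis comp_apply)
        also have "cinner (X (Tx (star x) \<xi>)) \<eta> = cinner (Tx (star x) \<xi>) (adj X \<eta>)" by (rule adj_spec(2)[OF Xb])
        also have "\<dots> = cinner \<xi> (Tx x (adj X \<eta>))" using Tx_adj[OF sx, of \<xi> "adj X \<eta>"] by (simp add: star_star)
        finally show "cinner \<xi> ((adj X \<circ> T) \<eta>) = cinner \<xi> ((T \<circ> adj X) \<eta>)" using x(2) by simp
      qed
    qed
  qed
next
  let ?M = "commutant (Tx ` A0)"
  fix X c assume X: "X \<in> ?M"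
  have Xb: "bounded_clinear_op X" and Xc: "\<And>x. x \<in> A0 \<Longrightarrow> X \<circ> Tx x = Tx x \<circ> X"
    using X unfolding commutant_def by auto
  show "(\<lambda>\<xi>. c *\<^sub>C X \<xi>) \<in> ?M"
    unfolding commutant_def
  proof (intro CollectI conjI ballI bclin_smult[OF Xb])
    fix T assume "T \<in> Tx ` A0"
    then obtain x where x: "x \<in> A0" "T = Tx x" by blast
    show "(\<lambda>\<xi>. c *\<^sub>C X \<xi>) \<circ> T = T \<circ> (\<lambda>\<xi>. c *\<^sub>C X \<xi>)"
    proof
      fix \<xi>
      have "X (T \<xi>) = T (X \<xi>)" using Xc[OF x(1)] x(2) by (metis comp_apply)
      then show "((\<lambda>\<xi>. c *\<^sub>C X \<xi>) \<circ> T) \<xi> = (T \<circ> (\<lambda>\<xi>. c *\<^sub>C X \<xi>)) \<xi>"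
        using bclin_scale[OF Tx_bclin[OF x(1)]] x(2) by simp
    qed
  qed
next
  show "commutant (commutant (commutant (Tx ` A0))) = commutant (Tx ` A0)"
    by (rule commutant_triple[OF N_bclin])
qed

lemma proj_in:
  assumes b: "b \<in> A0"
  shows "orth_proj (closure ((\<lambda>x. lam (mul x b)) ` A0)) \<in> commutant (Tx ` A0)"
proof -
  define V where "V = (\<lambda>x. lam (mul x b)) ` A0"
  define K where "K = closure V"
  have lb: "clinear_on UNIV (\<lambda>a. mul a b)" by (rule mulR_lin[OF b])
  have sV: "csubspace V" unfolding csubspace_def V_def
  proof (intro conjI ballI allI)
    show "0 \<in> (\<lambda>x. lam (mul x b)) ` A0"
      using A0_zero clin_zero[OF lb] clin_zero[OF lam_lin] by (metis image_eqI)
    fix u v c assume "u \<in> (\<lambda>x. lam (mul x b)) ` A0" "v \<in> (\<lambda>x. lam (mul x b)) ` A0"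
    then obtain y y' where y: "y \<in> A0" "u = lam (mul y b)" and y': "y' \<in> A0" "v = lam (mul y' b)" by blast
    have "u + v = lam (mul (y + y') b)" unfolding y y' clin_add[OF lb] clin_add[OF lam_lin] ..
    then show "u + v \<in> (\<lambda>x. lam (mul x b)) ` A0" using A0_add[OF y(1) y'(1)] by blast
    have "c *\<^sub>C u = lam (mul (c *\<^sub>C y) b)" unfolding y clin_scale[OF lb] clin_scale[OF lam_lin] ..
    then show "c *\<^sub>C u \<in> (\<lambda>x. lam (mul x b)) ` A0" using A0_scale[OF y(1)] by blast
  qed
  have sK: "csubspace K" "closed K" unfolding K_def using csubspace_closure[OF sV] by auto
  let ?P = "orth_proj K"
  have Pb: "bounded_clinear_op ?P" by (rule orth_proj_bclin[OF sK])
  have inv: "Tx x k \<in> K" if x: "x \<in> A0" and k: "k \<in> K" for x k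
  proof -
    have "Tx x ` V \<subseteq> K"
    proof
      fix u assume "u \<in> Tx x ` V"
      then obtain y where y: "y \<in> A0" "u = Tx x (lam (mul y b))" unfolding V_def by blast
      have "u = lam (mul (mul x y) b)" unfolding y(2) Tx_lam[OF x A0_mul[OF y(1) b]] assoc[OF x y(1) b] ..
      then have "u \<in> V" unfolding V_def using A0_mul[OF x y(1)] by blast
      then show "u \<in> K" unfolding K_def using closure_subset by blast
    qed
    then have "Tx x ` closure V \<subseteq> K"
      by (intro image_closure_subset[OF continuous_on_subset[OF bclin_cont[OF Tx_bclin[OF x]]]] sK(2)) auto
    then show ?thesis using k unfolding K_def by blast
  qed
  have "?P \<circ> Tx x = Tx x \<circ> ?P" if x: "x \<in> A0" for x
  proof
    fix \<xi>
    have sx: "star x \<in> A0" by (rule A0_star[OF x])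
    have "?P (Tx x \<xi>) = Tx x (?P \<xi>)"
    proof (rule orth_proj_eq[OF sK])
      show "Tx x (?P \<xi>) \<in> K" by (rule inv[OF x orth_proj_spec(1)[OF sK]])
      show "\<forall>y\<in>K. cinner (Tx x \<xi> - Tx x (?P \<xi>)) y = 0"
      proof
        fix y assume y: "y \<in> K"
        have "cinner (Tx x \<xi> - Tx x (?P \<xi>)) y = cinner (Tx x (\<xi> - ?P \<xi>)) y"
          by (simp only: bclin_diff[OF Tx_bclin[OF x]])
        also have "\<dots> = cinner (\<xi> - ?P \<xi>) (Tx (star x) y)" by (rule Tx_adj[OF x])
        also have "\<dots> = 0" using orth_proj_spec(2)[OF sK, of \<xi>] inv[OF sx y] by blast
        finally show "cinner (Tx x \<xi> - Tx x (?P \<xi>)) y = 0" .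
      qed
    qed
    then show "(?P \<circ> Tx x) \<xi> = (Tx x \<circ> ?P) \<xi>" by simp
  qed
  then have "?P \<in> commutant (Tx ` A0)" unfolding commutant_def using Pb by blast
  then show ?thesis unfolding K_def V_def .
qed

lemma main:
  assumes "b \<in> A0"
  shows "von_neumann_algebra (weak_commutant_pi A0 mul star lam) \<and>
         orth_proj (closure ((\<lambda>x. lam (mul x b)) ` A0)) \<in> weak_commutant_pi A0 mul star lam"
  unfolding wc_eq using vN proj_in[OF assms] by blast

end

theorem lemma11:
  fixes A0 :: "'a::complex_vector set"
    and mul :: "'a \<Rightarrow> 'a \<Rightarrow> 'a" and star :: "'a \<Rightarrow> 'a"
    and S :: "('a \<Rightarrow> real) set" and e :: 'a
    and \<omega>0 \<omega> :: "'a \<Rightarrow> complex" and p :: "'a \<Rightarrow> real"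
    and lam :: "'a \<Rightarrow> 'h::chilbert_space" and b :: 'a
  assumes "lcqsa A0 mul star S e"
    and "clinear_on A0 \<omega>0"
    and "\<forall>a\<in>A0. Im (\<omega>0 (mul (star a) a)) = 0 \<and> 0 \<le> Re (\<omega>0 (mul (star a) a))"
    and "seminorm_c p" and "lc_continuous_fun S p"
    and "\<forall>a\<in>A0. Re (\<omega>0 (mul (star a) a)) \<le> (p a)\<^sup>2"
    and "\<forall>x\<in>A0. \<omega> x = \<omega>0 x" and "lc_continuous_fun S \<omega>"
    and "gns A0 mul star \<omega> lam"
    and "\<forall>x\<in>A0. \<exists>K. \<forall>a\<in>A0. norm (lam (mul x a)) \<le> K * norm (lam a)"
    and "b \<in> A0"
  shows "von_neumann_algebra (weak_commutant_pi A0 mul star lam) \<and>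
         orth_proj (closure ((\<lambda>x. lam (mul x b)) ` A0)) \<in> weak_commutant_pi A0 mul star lam"
proof -
  interpret setting A0 mul star S e \<omega>0 \<omega> p lam
    using assms by unfold_locales auto
  show ?thesis by (rule main[OF assms(11)])
qed

end
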